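(* Let $u\in\mathbb{C}$ with $\mathrm{Re}(u)>0$. Then \[ \sum_{m=1}^{\infty}\int_{0}^{\infty}\frac{t\cos(t)}{t^2+m^2u^2}\,\mathrm{d}t=\frac{1}{2}\left\{\log\left(\frac{u}{2\pi}\right)-\frac{1}{2}\left(\psi\left(\frac{iu}{2\pi}\right)+\psi\left(\frac{-iu}{2\pi}\right)\right)\right\}. \]
   Context: $\psi=\Gamma'/\Gamma$ is the digamma function and $\log$ is the principal branch of the logarithm. *)

theory Defs
  imports "HOL-Analysis.Analysis"
begin

definition improper_integral_converges :: "(real \<Rightarrow> complex) \<Rightarrow> bool" where
  "improper_integral_converges f \<longleftrightarrow>
     (\<forall>T\<ge>0. f integrable_on {0..T}) \<and>
     (\<exists>L. ((\<lambda>T. integral {0..T} f) \<longlongrightarrow> L) at_top)"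

definition improper_integral :: "(real \<Rightarrow> complex) \<Rightarrow> complex" where
  "improper_integral f = Lim at_top (\<lambda>T. integral {0..T} f)"

end

theory Submission
  imports Defs "HOL-Real_Asymp.Real_Asymp"
begin


lemma Digamma_reflection:
  fixes z :: complex
  assumes z: "z \<notin> \<int>"
  shows "Digamma (1 - z) - Digamma z = of_real pi * cot (of_real pi * z)"
proof -
  have sinnz: "sin (of_real pi * w) \<noteq> 0" if "w \<notin> \<int>" for w :: complex
  proof
    assume "sin (of_real pi * w) = 0"
    then obtain n :: int where "of_real pi * w = of_real (of_int n * pi)" by (auto simp: sin_eq_0)
    hence "w = of_int n" by (simp add: field_simps)
    with that show False by auto
  qed
  have z1: "z \<notin> \<int>\<^sub>\<le>\<^sub>0" "1 - z \<notin> \<int>\<^sub>\<le>\<^sub>0" using z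
  proof -
    show "z \<notin> \<int>\<^sub>\<le>\<^sub>0" using z nonpos_Ints_subset_Ints by blast
    show "1 - z \<notin> \<int>\<^sub>\<le>\<^sub>0"
    proof
      assume "1 - z \<in> \<int>\<^sub>\<le>\<^sub>0"
      hence "1 - z \<in> \<int>" using nonpos_Ints_subset_Ints by blast
      hence "1 - (1 - z) \<in> \<int>" by (intro Ints_diff) auto
      with z show False by simp
    qed
  qed
  have oS: "open (- \<int> :: complex set)" using closed_Ints by (simp add: open_Compl)
  have d1: "((\<lambda>w. Gamma w * Gamma (1 - w)) has_field_derivative
      (Gamma z * Digamma z * Gamma (1 - z) + Gamma z * (Gamma (1 - z) * Digamma (1 - z) * (-1)))) (at z)"
    using z1 by (auto intro!: derivative_eq_intros)
  have d2: "((\<lambda>w. of_real pi / sin (of_real pi * w)) has_field_derivative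
      (- (of_real pi * (cos (of_real pi * z) * of_real pi)) / (sin (of_real pi * z))^2)) (at z)"
    using sinnz[OF z] by (auto intro!: derivative_eq_intros simp: power2_eq_square)
  have d1': "((\<lambda>w. of_real pi / sin (of_real pi * w)) has_field_derivative
      (Gamma z * Digamma z * Gamma (1 - z) + Gamma z * (Gamma (1 - z) * Digamma (1 - z) * (-1)))) (at z)"
    by (rule has_field_derivative_transform_within_open[OF d1 oS]) (use z Gamma_reflection_complex in auto)
  have eq: "Gamma z * Digamma z * Gamma (1 - z) + Gamma z * (Gamma (1 - z) * Digamma (1 - z) * (-1))
      = - (of_real pi * (cos (of_real pi * z) * of_real pi)) / (sin (of_real pi * z))^2"
    using DERIV_unique[OF d1' d2] .
  have GG: "Gamma z * Gamma (1 - z) = of_real pi / sin (of_real pi * z)"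
    by (rule Gamma_reflection_complex)
  have "(Gamma z * Gamma (1 - z)) * (Digamma z - Digamma (1 - z))
      = - (of_real pi * (cos (of_real pi * z) * of_real pi)) / (sin (of_real pi * z))^2"
    using eq by (simp add: algebra_simps)
  hence "of_real pi / sin (of_real pi * z) * (Digamma z - Digamma (1 - z))
      = - (of_real pi * (cos (of_real pi * z) * of_real pi)) / (sin (of_real pi * z))^2"
    using GG by simp
  hence "Digamma z - Digamma (1 - z) = - (of_real pi * cos (of_real pi * z)) / sin (of_real pi * z)"
  proof -
    assume h: "of_real pi / sin (of_real pi * z) * (Digamma z - Digamma (1 - z))
      = - (of_real pi * (cos (of_real pi * z) * of_real pi)) / (sin (of_real pi * z))^2"
    have pi0: "(of_real pi :: complex) \<noteq> 0" by simp
    note s0 = sinnz[OF z]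
    have "Digamma z - Digamma (1 - z) = (of_real pi / sin (of_real pi * z) * (Digamma z - Digamma (1 - z))) * (sin (of_real pi * z) / of_real pi)"
      using s0 pi0 by (simp add: field_simps)
    also have "\<dots> = - (of_real pi * cos (of_real pi * z)) / sin (of_real pi * z)"
      unfolding h using s0 pi0 by (simp add: field_simps power2_eq_square)
    finally show ?thesis .
  qed
  thus ?thesis by (simp add: cot_def field_simps)
qed


lemma Re_inverse_pos: "Re (u::complex) > 0 \<Longrightarrow> Re (inverse u) > 0"
proof -
  assume "Re u > 0"
  hence "Re (1 / u) > 0" using Re_complex_div_gt_0[of 1 u] by simp
  thus ?thesis by (simp add: inverse_eq_divide)
qed

lemma alg1:
  fixes u t P p :: complex
  assumes "u \<noteq> 0" "t \<noteq> 0" "P \<noteq> 1"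
  shows "(1/(2*\<i>*u)) * (1/(\<i>*t/u) - p*((P+1)/(\<i>*(P-1)))) = (2*p/u)/4 + ((2*p/u)/2)/(P-1) - 1/(2*t)"
proof -
  have P1: "P - 1 \<noteq> 0" using assms by simp
  show ?thesis using assms P1 by (simp add: field_simps)
qed

lemma alg2:
  fixes u t B C :: complex
  assumes "u \<noteq> 0" "B \<noteq> 0" "C \<noteq> 0" "C - B = 2 * (\<i> * t / u)"
  shows "(1 / (2 * \<i> * u)) * (inverse B - inverse C) = t / (u^2 * (B * C))"
proof -
  have "inverse B - inverse C = (C - B) / (B * C)" using assms by (simp add: field_simps)
  also have "\<dots> = 2 * (\<i> * t / u) / (B * C)" by (simp only: assms(4))
  finally have "inverse B - inverse C = 2 * (\<i> * t / u) / (B * C)" .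
  moreover have "(1 / (2 * \<i> * u)) * (2 * (\<i> * t / u) / (B * C)) = t / (u^2 * (B * C))"
    using assms(1-3) by (simp add: field_simps power2_eq_square)
  ultimately show ?thesis by simp
qed

lemma alg3:
  fixes u t x :: complex and k :: nat
  assumes "u \<noteq> 0" "x = \<i> * t / u"
  shows "t ^ 2 + of_nat (Suc k) ^ 2 * u ^ 2 = u^2 * (((1 - x) + of_nat k) * ((1 + x) + of_nat k))"
proof -
  have "((1 - x) + of_nat k) * ((1 + x) + of_nat k) = (1 + of_nat k)^2 - x^2"
    by (simp add: algebra_simps power2_eq_square)
  moreover have "x ^ 2 = - (t ^ 2) / u ^ 2" using assms(2) by (simp add: power_divide power_mult_distrib)
  ultimately show ?thesis using assms(1) by (simp add: field_simps)
qed

lemma cot_i_times_exp: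
  fixes y :: complex
  assumes "exp y * exp y \<noteq> 1"
  shows "cot (\<i> * y) = (exp y * exp y + 1) / (\<i> * (exp y * exp y - 1))"
proof -
  have E0: "exp y \<noteq> 0" by simp
  have "cot (\<i> * y) = ((exp y + inverse (exp y)) / 2) / (\<i> * ((exp y - inverse (exp y)) / 2))"
    by (simp add: cot_def cos_i_times sin_i_times)
  also have "\<dots> = (exp y * exp y + 1) / (\<i> * (exp y * exp y - 1))"
    using E0 assms by (simp add: field_simps)
  finally show ?thesis .
qed

lemma Im_x_pos:
  fixes u :: complex and t :: real
  assumes u: "Re u > 0" and t: "t > 0"
  shows "Im (\<i> * of_real t / u) > 0"
proof -
  have "\<i> * of_real t / u = \<i> * (of_real t * inverse u)" by (simp add: divide_inverse)
  hence "Im (\<i> * of_real t / u) = t * Re (inverse u)" by simp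
  thus ?thesis using t Re_inverse_pos[OF u] by (metis mult_pos_pos)
qed

lemma Re_y_pos:
  fixes u :: complex and t :: real
  assumes u: "Re u > 0" and t: "t > 0"
  shows "Re (of_real pi * of_real t / u) > 0"
proof -
  have "of_real pi * of_real t / u = of_real (pi * t) * inverse u" by (simp add: divide_inverse)
  hence "Re (of_real pi * of_real t / u) = pi * t * Re (inverse u)" by simp
  thus ?thesis using t Re_inverse_pos[OF u] by (metis mult_pos_pos pi_gt_zero)
qed

lemma Im_nz: "Im (z::complex) \<noteq> 0 \<Longrightarrow> z \<noteq> 0" by auto

lemma S_series_digamma:
  fixes u x :: complex and t :: real
  assumes u0: "u \<noteq> 0" and x: "x = \<i> * of_real t / u" and Imx: "Im x > 0"
  shows "(\<lambda>m. of_real t / (of_real t ^ 2 + of_nat (Suc m) ^ 2 * u ^ 2)) sums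
           ((1 / (2 * \<i> * u)) * (Digamma (1 + x) - Digamma (1 - x)))"
proof -
  have nz1: "(1 + x) + of_nat k \<noteq> 0" for k :: nat
    by (rule Im_nz) (use Imx in simp)
  have nz2: "(1 - x) + of_nat k \<noteq> 0" for k :: nat
    by (rule Im_nz) (use Imx in simp)
  have s1: "(\<lambda>k. inverse (of_nat (Suc k)) - inverse ((1 + x) + of_nat k)) sums (Digamma (1 + x) + euler_mascheroni)"
  proof -
    have "1 + x \<noteq> 0" using nz1[of 0] by simp
    from summable_sums[OF summable_Digamma[OF this]] show ?thesis by (simp add: Digamma_def)
  qed
  have s2: "(\<lambda>k. inverse (of_nat (Suc k)) - inverse ((1 - x) + of_nat k)) sums (Digamma (1 - x) + euler_mascheroni)"
  proof -
    have "1 - x \<noteq> 0" using nz2[of 0] by simp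
    from summable_sums[OF summable_Digamma[OF this]] show ?thesis by (simp add: Digamma_def)
  qed
  have s3: "(\<lambda>k. inverse ((1 - x) + of_nat k) - inverse ((1 + x) + of_nat k)) sums (Digamma (1 + x) - Digamma (1 - x))"
    using sums_diff[OF s1 s2] by simp
  have s4: "(\<lambda>k. (1 / (2 * \<i> * u)) * (inverse ((1 - x) + of_nat k) - inverse ((1 + x) + of_nat k)))
        sums ((1 / (2 * \<i> * u)) * (Digamma (1 + x) - Digamma (1 - x)))"
    by (rule sums_mult[OF s3])
  have termeq: "(1 / (2 * \<i> * u)) * (inverse ((1 - x) + of_nat k) - inverse ((1 + x) + of_nat k))
       = of_real t / (of_real t ^ 2 + of_nat (Suc k) ^ 2 * u ^ 2)" for k
  proof -
    have d: "of_real t ^ 2 + of_nat (Suc k) ^ 2 * u ^ 2 = u^2 * (((1 - x) + of_nat k) * ((1 + x) + of_nat k))"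
      by (rule alg3[OF u0 x])
    have cb: "((1 + x) + of_nat k) - ((1 - x) + of_nat k) = 2 * (\<i> * of_real t / u)"
      by (simp add: x)
    show ?thesis unfolding d
      by (rule alg2[OF u0 nz2[of k] nz1[of k] cb])
  qed
  have eqf: "(\<lambda>k. (1 / (2 * \<i> * u)) * (inverse ((1 - x) + of_nat k) - inverse ((1 + x) + of_nat k)))
     = (\<lambda>m. of_real t / (of_real t ^ 2 + of_nat (Suc m) ^ 2 * u ^ 2))"
    by (rule ext) (rule termeq)
  from s4 show ?thesis by (simp only: eqf)
qed


lemma S_closed_form:
  fixes u :: complex and t :: real
  assumes u: "Re u > 0" and t: "t > 0"
  shows "(\<lambda>m. of_real t / (of_real t ^ 2 + of_nat (Suc m) ^ 2 * u ^ 2)) sums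
           ((2 * of_real pi / u) / 4 + ((2 * of_real pi / u) / 2) / (exp ((2 * of_real pi / u) * of_real t) - 1) - 1 / (2 * of_real t))"
proof -
  have u0: "u \<noteq> 0" using u by auto
  define x where "x = \<i> * of_real t / u"
  have Imx: "Im x > 0" unfolding x_def by (rule Im_x_pos[OF u t])
  have x0: "x \<noteq> 0" using Imx by auto
  have xnI: "x \<notin> \<int>" using Imx by (auto simp: complex_is_Int_iff)
  have dig1: "Digamma (1 + x) = Digamma x + 1 / x"
    using Digamma_plus1[OF x0] by (simp add: add.commute)
  have dig2: "Digamma (1 - x) = Digamma x + of_real pi * cot (of_real pi * x)"
    using Digamma_reflection[OF xnI] by (simp add: algebra_simps)
  define y where "y = of_real pi * of_real t / u"
  have pix: "of_real pi * x = \<i> * y" by (simp add: x_def y_def)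
  have Rey: "Re y > 0" unfolding y_def by (rule Re_y_pos[OF u t])
  have EE: "exp y * exp y = exp ((2 * of_real pi / u) * of_real t)"
  proof -
    have e: "(2 * of_real pi / u) * of_real t = y + y" by (simp add: y_def)
    show ?thesis unfolding e by (rule exp_add[symmetric])
  qed
  have EE1: "exp y * exp y \<noteq> 1"
  proof
    assume "exp y * exp y = 1"
    hence "norm (exp y * exp y) = 1" by simp
    moreover have "norm (exp y * exp y) = exp (Re y) * exp (Re y)" by (simp add: norm_mult norm_exp_eq_Re)
    moreover have "exp (Re y) > 1" using Rey by simp
    ultimately show False by (smt (verit) one_less_exp_iff mult_less_cancel_left1)
  qed
  have "(1 / (2 * \<i> * u)) * (Digamma (1 + x) - Digamma (1 - x))
      = (1 / (2 * \<i> * u)) * (1 / x - of_real pi * ((exp y * exp y + 1) / (\<i> * (exp y * exp y - 1))))"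
    unfolding dig1 dig2 pix cot_i_times_exp[OF EE1] by simp
  also have "\<dots> = (2 * of_real pi / u) / 4 + ((2 * of_real pi / u) / 2) / (exp y * exp y - 1) - 1 / (2 * of_real t)"
    unfolding x_def by (rule alg1[OF u0 _ EE1]) (use t in simp)
  finally have val: "(1 / (2 * \<i> * u)) * (Digamma (1 + x) - Digamma (1 - x)) = 
     (2 * of_real pi / u) / 4 + ((2 * of_real pi / u) / 2) / (exp ((2 * of_real pi / u) * of_real t) - 1) - 1 / (2 * of_real t)"
    unfolding EE .
  show ?thesis using S_series_digamma[OF u0 x_def Imx] unfolding val .
qed


definition gg :: "complex \<Rightarrow> real \<Rightarrow> complex" where
  "gg a t = of_real t / (of_real t ^ 2 + a ^ 2)"
definition g1 :: "complex \<Rightarrow> real \<Rightarrow> complex" where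
  "g1 a t = (a ^ 2 - of_real t ^ 2) / (of_real t ^ 2 + a ^ 2) ^ 2"
definition g2 :: "complex \<Rightarrow> real \<Rightarrow> complex" where
  "g2 a t = (2 * of_real t ^ 3 - 6 * a ^ 2 * of_real t) / (of_real t ^ 2 + a ^ 2) ^ 3"
definition PP :: "complex \<Rightarrow> real \<Rightarrow> complex" where
  "PP a t = of_real (sin t) * gg a t + of_real (cos t) * g1 a t"

lemma lowbnd:
  fixes a :: complex and t :: real
  assumes "Re a > 0"
  shows "cmod (of_real t ^ 2 + a ^ 2) \<ge> (t ^ 2 + (cmod a) ^ 2) * (Re a / cmod a)"
proof -
  have a0: "cmod a > 0" using assms by auto
  have e: "(of_real t ^ 2 + a ^ 2) * cnj a = of_real (t ^ 2) * cnj a + a * (a * cnj a)"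
    by (simp add: power2_eq_square algebra_simps)
  have r: "Re (a * (a * cnj a)) = Re a * ((Re a)\<^sup>2 + (Im a)\<^sup>2)"
    unfolding complex_mult_cnj by simp
  have "Re ((of_real t ^ 2 + a ^ 2) * cnj a) = Re (of_real (t ^ 2) * cnj a) + Re (a * (a * cnj a))"
    by (simp only: e plus_complex.sel)
  also have "\<dots> = t ^ 2 * Re a + Re a * ((Re a)\<^sup>2 + (Im a)\<^sup>2)"
    by (simp only: r) simp
  also have "\<dots> = (t ^ 2 + (cmod a) ^ 2) * Re a" by (simp add: cmod_power2 algebra_simps)
  finally have eqRe: "Re ((of_real t ^ 2 + a ^ 2) * cnj a) = (t ^ 2 + (cmod a) ^ 2) * Re a" .
  have "(t ^ 2 + (cmod a) ^ 2) * Re a = Re ((of_real t ^ 2 + a ^ 2) * cnj a)" using eqRe by simp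
  also have "Re ((of_real t ^ 2 + a ^ 2) * cnj a) \<le> cmod ((of_real t ^ 2 + a ^ 2) * cnj a)"
    by (rule complex_Re_le_cmod)
  also have "\<dots> = cmod (of_real t ^ 2 + a ^ 2) * cmod a" by (simp add: norm_mult)
  finally have "(t ^ 2 + (cmod a) ^ 2) * Re a \<le> cmod (of_real t ^ 2 + a ^ 2) * cmod a" .
  thus ?thesis using a0 by (simp add: field_simps)
qed

lemma k_pos: "Re a > 0 \<Longrightarrow> Re a / cmod a > 0"
  by (auto intro!: divide_pos_pos)

lemma k_le1: "Re a > 0 \<Longrightarrow> Re a / cmod a \<le> 1"
  using complex_Re_le_cmod[of a] by (simp add: divide_le_eq_1)

lemma Dpos: "Re a > 0 \<Longrightarrow> 0 < t ^ 2 + (cmod a) ^ 2"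
proof -
  assume "Re a > 0" hence "cmod a > 0" by auto
  hence "(cmod a) ^ 2 > 0" by simp
  thus ?thesis by (intro add_nonneg_pos) auto
qed

lemma D_nz:
  fixes a :: complex and t :: real
  assumes "Re a > 0"
  shows "of_real t ^ 2 + a ^ 2 \<noteq> 0"
proof -
  have "0 < (t ^ 2 + (cmod a) ^ 2) * (Re a / cmod a)"
    using Dpos[OF assms] k_pos[OF assms] by (intro mult_pos_pos)
  also have "\<dots> \<le> cmod (of_real t ^ 2 + a ^ 2)" by (rule lowbnd[OF assms])
  finally show ?thesis by auto
qed

lemma bnd_gg:
  fixes a :: complex and t :: real
  assumes "Re a > 0" "t \<ge> 0"
  shows "cmod (gg a t) \<le> t / ((t ^ 2 + (cmod a) ^ 2) * (Re a / cmod a))"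
proof -
  have p: "0 < (t ^ 2 + (cmod a) ^ 2) * (Re a / cmod a)"
    using Dpos[OF assms(1)] k_pos[OF assms(1)] by (intro mult_pos_pos)
  have "cmod (gg a t) = t / cmod (of_real t ^ 2 + a ^ 2)"
    using assms by (simp add: gg_def norm_divide)
  also have "\<dots> \<le> t / ((t ^ 2 + (cmod a) ^ 2) * (Re a / cmod a))"
    by (rule frac_le) (use assms p lowbnd[OF assms(1), of t] in auto)
  finally show ?thesis .
qed

lemma bnd_g1:
  fixes a :: complex and t :: real
  assumes "Re a > 0"
  shows "cmod (g1 a t) \<le> 1 / ((t ^ 2 + (cmod a) ^ 2) * (Re a / cmod a) ^ 2)"
proof -
  define k where "k = Re a / cmod a"
  define D where "D = t ^ 2 + (cmod a) ^ 2"
  have k: "k > 0" "k \<le> 1" using k_pos[OF assms] k_le1[OF assms] by (auto simp: k_def)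
  have D: "D > 0" using Dpos[of a t] assms by (simp add: D_def)
  have lb: "D * k \<le> cmod (of_real t ^ 2 + a ^ 2)" using lowbnd[OF assms, of t] by (simp add: D_def k_def)
  have num: "cmod (a ^ 2 - of_real t ^ 2) \<le> D"
    using norm_triangle_ineq4[of "a^2" "of_real t ^ 2"] by (simp add: D_def norm_power)
  have "cmod (g1 a t) = cmod (a ^ 2 - of_real t ^ 2) / cmod (of_real t ^ 2 + a ^ 2) ^ 2"
    by (simp add: g1_def norm_divide norm_power)
  also have "\<dots> \<le> D / (D * k) ^ 2"
    using num lb D k by (intro frac_le power_mono) (auto intro!: mult_pos_pos)
  also have "\<dots> = 1 / (D * k ^ 2)" using D k by (simp add: field_simps power2_eq_square)
  finally show ?thesis by (simp add: D_def k_def)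
qed

lemma bnd_g2:
  fixes a :: complex and t :: real
  assumes "Re a > 0" "t \<ge> 0"
  shows "cmod (g2 a t) \<le> 6 * t / ((t ^ 2 + (cmod a) ^ 2) ^ 2 * (Re a / cmod a) ^ 3)"
proof -
  define k where "k = Re a / cmod a"
  define D where "D = t ^ 2 + (cmod a) ^ 2"
  have k: "k > 0" "k \<le> 1" using k_pos[OF assms(1)] k_le1[OF assms(1)] by (auto simp: k_def)
  have D: "D > 0" using Dpos[of a t] assms by (simp add: D_def)
  have lb: "D * k \<le> cmod (of_real t ^ 2 + a ^ 2)" using lowbnd[OF assms(1), of t] by (simp add: D_def k_def)
  have "cmod (2 * of_real t ^ 3 - 6 * a ^ 2 * of_real t) \<le> cmod (2 * of_real t ^ 3) + cmod (6 * a ^ 2 * of_real t)"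
    by (rule norm_triangle_ineq4)
  also have "\<dots> = 2 * t ^ 3 + 6 * (cmod a) ^ 2 * t" using assms by (simp add: norm_mult norm_power)
  also have "\<dots> \<le> 6 * t * D" using assms by (simp add: D_def algebra_simps power3_eq_cube power2_eq_square)
  finally have num: "cmod (2 * of_real t ^ 3 - 6 * a ^ 2 * of_real t) \<le> 6 * t * D" .
  have "cmod (g2 a t) = cmod (2 * of_real t ^ 3 - 6 * a ^ 2 * of_real t) / cmod (of_real t ^ 2 + a ^ 2) ^ 3"
    by (simp add: g2_def norm_divide norm_power)
  also have "\<dots> \<le> (6 * t * D) / (D * k) ^ 3"
    using num lb D k assms by (intro frac_le power_mono) (auto intro!: mult_pos_pos)
  also have "\<dots> = 6 * t / (D ^ 2 * k ^ 3)" using D k by (simp add: field_simps power3_eq_cube power2_eq_square)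
  finally show ?thesis by (simp add: D_def k_def)
qed

lemma deriv_gg:
  fixes a z :: complex
  assumes "z ^ 2 + a ^ 2 \<noteq> 0"
  shows "((\<lambda>z. z / (z ^ 2 + a ^ 2)) has_field_derivative (a ^ 2 - z ^ 2) / (z ^ 2 + a ^ 2) ^ 2) (at z)"
  using assms by (auto intro!: derivative_eq_intros simp: field_simps power2_eq_square)

lemma alg4:
  fixes D z a :: complex
  assumes "D \<noteq> 0" "D = z ^ 2 + a ^ 2"
  shows "((-(2*z)) * D ^ 2 - (a ^ 2 - z ^ 2) * (2 * D * (2 * z))) / (D ^ 2 * D ^ 2) = (2 * z ^ 3 - 6 * a ^ 2 * z) / D ^ 3"
proof -
  have "((-(2*z)) * D ^ 2 - (a ^ 2 - z ^ 2) * (2 * D * (2 * z))) / (D ^ 2 * D ^ 2)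
      = ((-(2*z)) * D - (a ^ 2 - z ^ 2) * (4 * z)) / D ^ 3"
    using assms(1) by (simp add: field_simps power2_eq_square power3_eq_cube)
  also have "(-(2*z)) * D - (a ^ 2 - z ^ 2) * (4 * z) = 2 * z ^ 3 - 6 * a ^ 2 * z"
    using assms(2) by (simp add: algebra_simps power2_eq_square power3_eq_cube)
  finally show ?thesis .
qed

lemma deriv_g1:
  fixes a z :: complex
  assumes "z ^ 2 + a ^ 2 \<noteq> 0"
  shows "((\<lambda>z. (a ^ 2 - z ^ 2) / (z ^ 2 + a ^ 2) ^ 2) has_field_derivative
          (2 * z ^ 3 - 6 * a ^ 2 * z) / (z ^ 2 + a ^ 2) ^ 3) (at z)"
proof -
  have f: "((\<lambda>z. a ^ 2 - z ^ 2) has_field_derivative (-(2*z))) (at z)"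
    by (auto intro!: derivative_eq_intros)
  have g: "((\<lambda>z. (z ^ 2 + a ^ 2) ^ 2) has_field_derivative (2 * (z ^ 2 + a ^ 2) * (2 * z))) (at z)"
    by (auto intro!: derivative_eq_intros)
  have "((\<lambda>z. (a ^ 2 - z ^ 2) / (z ^ 2 + a ^ 2) ^ 2) has_field_derivative
     ((-(2*z)) * (z ^ 2 + a ^ 2) ^ 2 - (a ^ 2 - z ^ 2) * (2 * (z ^ 2 + a ^ 2) * (2 * z))) / ((z ^ 2 + a ^ 2) ^ 2 * (z ^ 2 + a ^ 2) ^ 2)) (at z)"
    by (rule DERIV_divide[OF f g]) (use assms in simp)
  thus ?thesis unfolding alg4[OF assms refl] .
qed


lemma tail_limit:
  fixes G :: "real \<Rightarrow> 'a::banach" and B :: "real \<Rightarrow> real"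
  assumes diff: "\<And>T1 T2. 0 \<le> T1 \<Longrightarrow> T1 \<le> T2 \<Longrightarrow> norm (G T2 - G T1) \<le> B T1"
    and B: "(B \<longlongrightarrow> 0) at_top"
  obtains L where "(G \<longlongrightarrow> L) at_top" "\<And>T. 0 \<le> T \<Longrightarrow> norm (G T - L) \<le> B T"
proof -
  have "Cauchy (\<lambda>n::nat. G (real n))"
  proof (rule metric_CauchyI)
    fix e :: real assume e: "e > 0"
    have "eventually (\<lambda>T. dist (B T) 0 < e) at_top" using B e by (rule tendstoD)
    then obtain T0 where T0: "\<And>T. T \<ge> T0 \<Longrightarrow> dist (B T) 0 < e" by (auto simp: eventually_at_top_linorder)
    obtain M :: nat where M: "real M \<ge> max T0 0" using real_arch_simple by blast
    have "dist (G (real m)) (G (real n)) < e" if "m \<ge> M" "n \<ge> M" for m n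
    proof (cases "m \<le> n")
      case True
      have "dist (G (real m)) (G (real n)) = norm (G (real n) - G (real m))" by (simp add: dist_norm norm_minus_commute)
      also have "\<dots> \<le> B (real m)" using diff[of "real m" "real n"] True by simp
      also have "\<dots> < e" using T0[of "real m"] M that by (simp add: dist_real_def)
      finally show ?thesis .
    next
      case False
      have "dist (G (real m)) (G (real n)) = norm (G (real m) - G (real n))" by (simp add: dist_norm)
      also have "\<dots> \<le> B (real n)" using diff[of "real n" "real m"] False by simp
      also have "\<dots> < e" using T0[of "real n"] M that by (simp add: dist_real_def)
      finally show ?thesis .
    qed
    thus "\<exists>M. \<forall>m\<ge>M. \<forall>n\<ge>M. dist (G (real m)) (G (real n)) < e" by blast
  qed
  then obtain L where L: "(\<lambda>n. G (real n)) \<longlonglongrightarrow> L" using Cauchy_convergent_iff convergent_def by blast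
  have bnd: "norm (G T - L) \<le> B T" if T: "0 \<le> T" for T
  proof -
    have lim: "(\<lambda>n. G (real n) - G T) \<longlonglongrightarrow> L - G T" by (intro tendsto_intros L)
    have ev: "eventually (\<lambda>n. norm (G (real n) - G T) \<le> B T) sequentially"
      using eventually_ge_at_top[of "nat \<lceil>T\<rceil>"]
    proof eventually_elim
      case (elim n)
      hence "T \<le> real n" by linarith
      thus ?case using diff[OF T] by blast
    qed
    have "norm (L - G T) \<le> B T" by (rule Lim_norm_ubound[OF _ lim ev]) simp
    thus ?thesis by (simp add: norm_minus_commute)
  qed
  have "((\<lambda>T. G T - L) \<longlongrightarrow> 0) at_top"
  proof (rule Lim_null_comparison[OF _ B])
    show "eventually (\<lambda>T. norm (G T - L) \<le> B T) at_top"
      using eventually_ge_at_top[of "0::real"] by eventually_elim (rule bnd)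
  qed
  hence "(G \<longlongrightarrow> L) at_top" using tendsto_add[OF _ tendsto_const[of L]] by fastforce
  thus ?thesis using that bnd by blast
qed

lemma lim_inv_sq: "((\<lambda>T::real. c / (T ^ 2 + d)) \<longlongrightarrow> 0) at_top"
  by real_asymp

lemma ring1: "(c::complex) * g + X * s + ((- s) * X + h * c) = c * (g + h)"
  by (simp add: algebra_simps)

lemma ftc_a:
  fixes a :: complex and T :: real
  assumes a: "Re a > 0" and T: "T \<ge> 0"
  shows "((\<lambda>t. of_real (cos t) * (gg a t + g2 a t)) has_integral (PP a T - PP a 0)) {0..T}"
proof -
  define Q where "Q z = sin z * (z / (z ^ 2 + a ^ 2)) + cos z * ((a ^ 2 - z ^ 2) / (z ^ 2 + a ^ 2) ^ 2)" for z
  define Q' where "Q' z = cos z * (z / (z ^ 2 + a ^ 2) + (2 * z ^ 3 - 6 * a ^ 2 * z) / (z ^ 2 + a ^ 2) ^ 3)" for z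
  have dQ: "(Q has_field_derivative Q' z) (at z)" if z: "z ^ 2 + a ^ 2 \<noteq> 0" for z
  proof -
    have "(Q has_field_derivative
       (cos z * (z / (z ^ 2 + a ^ 2)) + (a ^ 2 - z ^ 2) / (z ^ 2 + a ^ 2) ^ 2 * sin z) +
       ((- sin z) * ((a ^ 2 - z ^ 2) / (z ^ 2 + a ^ 2) ^ 2) + (2 * z ^ 3 - 6 * a ^ 2 * z) / (z ^ 2 + a ^ 2) ^ 3 * cos z)) (at z)"
      unfolding Q_def
      by (intro DERIV_add DERIV_mult DERIV_sin DERIV_cos deriv_gg[OF z] deriv_g1[OF z])
    also have "(cos z * (z / (z ^ 2 + a ^ 2)) + (a ^ 2 - z ^ 2) / (z ^ 2 + a ^ 2) ^ 2 * sin z) +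
       ((- sin z) * ((a ^ 2 - z ^ 2) / (z ^ 2 + a ^ 2) ^ 2) + (2 * z ^ 3 - 6 * a ^ 2 * z) / (z ^ 2 + a ^ 2) ^ 3 * cos z)
       = Q' z" unfolding Q'_def by (rule ring1)
    finally show ?thesis .
  qed
  have vd: "((\<lambda>t. Q (of_real t)) has_vector_derivative Q' (of_real t)) (at t within {0..T})" for t
    by (rule has_vector_derivative_real_field[OF dQ]) (rule D_nz[OF a])
  have "((\<lambda>t. Q' (of_real t)) has_integral (Q (of_real T) - Q (of_real 0))) {0..T}"
    by (rule fundamental_theorem_of_calculus[OF T vd])
  moreover have "(\<lambda>t. Q' (of_real t)) = (\<lambda>t. of_real (cos t) * (gg a t + g2 a t))"
    by (rule ext) (simp add: Q'_def gg_def g2_def cos_of_real)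
  moreover have "Q (of_real t) = PP a t" for t
    by (simp add: Q_def PP_def gg_def g1_def cos_of_real sin_of_real)
  moreover have "Q 0 = PP a 0" by (simp add: Q_def PP_def gg_def g1_def)
  ultimately show ?thesis by simp
qed

lemma alg5: "(D::real) > 0 \<Longrightarrow> k > 0 \<Longrightarrow> (0 * (k ^ 3 * D) - (- 3) * (k ^ 3 * (2 * t))) / ((k ^ 3 * D) * (k ^ 3 * D)) = 6 * t / (D ^ 2 * k ^ 3)"
  by (simp add: field_simps power2_eq_square power3_eq_cube)

lemma alg6: "(D1::real) \<noteq> 0 \<Longrightarrow> D2 \<noteq> 0 \<Longrightarrow> k \<noteq> 0 \<Longrightarrow> - 3 / (k ^ 3 * D2) - - 3 / (k ^ 3 * D1) = 3 / k ^ 3 * (1 / D1 - 1 / D2)"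
  by (simp add: field_simps)

lemma H_int:
  fixes A k T1 T2 :: real
  assumes "A > 0" "k > 0" "T1 \<le> T2"
  shows "((\<lambda>t. 6 * t / ((t ^ 2 + A ^ 2) ^ 2 * k ^ 3)) has_integral
          (3 / k ^ 3 * (1 / (T1 ^ 2 + A ^ 2) - 1 / (T2 ^ 2 + A ^ 2)))) {T1..T2}"
proof -
  define F where "F t = - 3 / (k ^ 3 * (t ^ 2 + A ^ 2))" for t
  have pos: "t ^ 2 + A ^ 2 > 0" for t using assms by (intro add_nonneg_pos) auto
  have "(F has_real_derivative 6 * t / ((t ^ 2 + A ^ 2) ^ 2 * k ^ 3)) (at t within {T1..T2})" for t
  proof -
    have nz: "k ^ 3 * (t ^ 2 + A ^ 2) \<noteq> 0" using pos[of t] assms by simp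
    have g: "((\<lambda>t. k ^ 3 * (t ^ 2 + A ^ 2)) has_real_derivative k ^ 3 * (2 * t)) (at t within {T1..T2})"
      by (auto intro!: derivative_eq_intros)
    have "(F has_real_derivative (0 * (k ^ 3 * (t ^ 2 + A ^ 2)) - (- 3) * (k ^ 3 * (2 * t))) / ((k ^ 3 * (t ^ 2 + A ^ 2)) * (k ^ 3 * (t ^ 2 + A ^ 2)))) (at t within {T1..T2})"
      unfolding F_def by (rule DERIV_divide[OF DERIV_const g nz])
    moreover have "(0 * (k ^ 3 * (t ^ 2 + A ^ 2)) - (- 3) * (k ^ 3 * (2 * t))) / ((k ^ 3 * (t ^ 2 + A ^ 2)) * (k ^ 3 * (t ^ 2 + A ^ 2)))
       = 6 * t / ((t ^ 2 + A ^ 2) ^ 2 * k ^ 3)"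
      by (rule alg5) (use pos[of t] assms in auto)
    ultimately show ?thesis by simp
  qed
  hence "((\<lambda>t. 6 * t / ((t ^ 2 + A ^ 2) ^ 2 * k ^ 3)) has_integral (F T2 - F T1)) {T1..T2}"
    using assms by (intro fundamental_theorem_of_calculus) (auto simp: has_real_derivative_iff_has_vector_derivative)
  moreover have "F T2 - F T1 = 3 / k ^ 3 * (1 / (T1 ^ 2 + A ^ 2) - 1 / (T2 ^ 2 + A ^ 2))"
    unfolding F_def by (rule alg6) (use pos[of T1] pos[of T2] assms in auto)
  ultimately show ?thesis by simp
qed


lemma cont_g2: "Re a > 0 \<Longrightarrow> continuous_on S (\<lambda>t. of_real (cos t) * g2 a t)"
  unfolding g2_def by (auto intro!: continuous_intros simp: D_nz)

lemma cont_gg: "Re a > 0 \<Longrightarrow> continuous_on S (\<lambda>t. of_real (cos t) * gg a t)"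
  unfolding gg_def by (auto intro!: continuous_intros simp: D_nz)

definition G2 :: "complex \<Rightarrow> real \<Rightarrow> complex" where
  "G2 a T = integral {0..T} (\<lambda>t. of_real (cos t) * g2 a t)"

lemma cos_mult_le: "x \<ge> (0::real) \<Longrightarrow> \<bar>cos (t::real)\<bar> * x \<le> x"
  using mult_right_mono[OF abs_cos_le_one[of t], of x] by simp

lemma sin_mult_le: "x \<ge> (0::real) \<Longrightarrow> \<bar>sin (t::real)\<bar> * x \<le> x"
  using mult_right_mono[OF abs_sin_le_one[of t], of x] by simp

lemma G2_tail:
  fixes a :: complex
  assumes a: "Re a > 0"
  obtains L where "(G2 a \<longlongrightarrow> L) at_top"
    "\<And>T. 0 \<le> T \<Longrightarrow> norm (G2 a T - L) \<le> 3 / ((Re a / cmod a) ^ 3 * (T ^ 2 + (cmod a) ^ 2))"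
proof -
  define k where "k = Re a / cmod a"
  define A where "A = cmod a"
  have k: "k > 0" unfolding k_def by (rule k_pos[OF a])
  have A: "A > 0" unfolding A_def using a by auto
  have diff: "norm (G2 a T2 - G2 a T1) \<le> 3 / (k ^ 3 * (T1 ^ 2 + A ^ 2))" if T: "0 \<le> T1" "T1 \<le> T2" for T1 T2
  proof -
    have int: "(\<lambda>t. of_real (cos t) * g2 a t) integrable_on {0..T2}"
      by (rule integrable_continuous_interval[OF cont_g2[OF a]])
    have int2: "(\<lambda>t. of_real (cos t) * g2 a t) integrable_on {T1..T2}"
      by (rule integrable_continuous_interval[OF cont_g2[OF a]])
    have "G2 a T2 - G2 a T1 = integral {T1..T2} (\<lambda>t. of_real (cos t) * g2 a t)"
      using Henstock_Kurzweil_Integration.integral_combine[OF T int] unfolding G2_def by (simp add: algebra_simps)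
    hence "norm (G2 a T2 - G2 a T1) = norm (integral {T1..T2} (\<lambda>t. of_real (cos t) * g2 a t))" by simp
    also have "\<dots> \<le> integral {T1..T2} (\<lambda>t. 6 * t / ((t ^ 2 + A ^ 2) ^ 2 * k ^ 3))"
    proof (rule integral_norm_bound_integral[OF int2])
      show "(\<lambda>t. 6 * t / ((t ^ 2 + A ^ 2) ^ 2 * k ^ 3)) integrable_on {T1..T2}"
        using H_int[OF A k T(2)] by blast
      fix t assume t: "t \<in> {T1..T2}"
      hence t0: "t \<ge> 0" using T by auto
      have "norm (of_real (cos t) * g2 a t) = \<bar>cos t\<bar> * cmod (g2 a t)" by (simp add: norm_mult)
      also have "\<dots> \<le> cmod (g2 a t)" by (rule cos_mult_le) simp
      also have "\<dots> \<le> 6 * t / ((t ^ 2 + A ^ 2) ^ 2 * k ^ 3)"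
        using bnd_g2[OF a t0] by (simp add: k_def A_def)
      finally show "norm (of_real (cos t) * g2 a t) \<le> 6 * t / ((t ^ 2 + A ^ 2) ^ 2 * k ^ 3)" .
    qed
    also have "\<dots> = 3 / k ^ 3 * (1 / (T1 ^ 2 + A ^ 2) - 1 / (T2 ^ 2 + A ^ 2))"
      by (rule integral_unique[OF H_int[OF A k T(2)]])
    also have "\<dots> \<le> 3 / k ^ 3 * (1 / (T1 ^ 2 + A ^ 2))"
    proof -
      have "0 < T2 ^ 2 + A ^ 2" using A by (intro add_nonneg_pos) auto
      hence "0 \<le> 1 / (T2 ^ 2 + A ^ 2)" by simp
      thus ?thesis using k by (intro mult_left_mono) auto
    qed
    also have "\<dots> = 3 / (k ^ 3 * (T1 ^ 2 + A ^ 2))" by simp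
    finally show ?thesis .
  qed
  have B: "((\<lambda>T. 3 / (k ^ 3 * (T ^ 2 + A ^ 2))) \<longlongrightarrow> 0) at_top"
  proof -
    have "((\<lambda>T. (3 / k ^ 3) / (T ^ 2 + A ^ 2)) \<longlongrightarrow> 0) at_top" by (rule lim_inv_sq)
    thus ?thesis by simp
  qed
  obtain L where L: "(G2 a \<longlongrightarrow> L) at_top" "\<And>T. 0 \<le> T \<Longrightarrow> norm (G2 a T - L) \<le> 3 / (k ^ 3 * (T ^ 2 + A ^ 2))"
    using tail_limit[of "G2 a" "\<lambda>T. 3 / (k ^ 3 * (T ^ 2 + A ^ 2))", OF diff B] by blast
  show ?thesis using that[OF L(1)] L(2) by (simp add: k_def A_def)
qed

lemma int_gg:
  fixes a :: complex
  assumes a: "Re a > 0" and T: "T \<ge> 0"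
  shows "((\<lambda>t. of_real (cos t) * gg a t) has_integral (PP a T - PP a 0 - G2 a T)) {0..T}"
proof -
  have i2: "((\<lambda>t. of_real (cos t) * g2 a t) has_integral G2 a T) {0..T}"
    unfolding G2_def by (rule integrable_integral[OF integrable_continuous_interval[OF cont_g2[OF a]]])
  have "((\<lambda>t. of_real (cos t) * (gg a t + g2 a t) - of_real (cos t) * g2 a t) has_integral (PP a T - PP a 0 - G2 a T)) {0..T}"
    by (rule has_integral_diff[OF ftc_a[OF a T] i2])
  thus ?thesis by (simp add: algebra_simps)
qed

lemma lim_t_sq: "((\<lambda>T::real. T / (T ^ 2 + d)) \<longlongrightarrow> 0) at_top"
  by real_asymp

lemma PP_lim:
  fixes a :: complex
  assumes a: "Re a > 0"
  shows "(PP a \<longlongrightarrow> 0) at_top"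
proof -
  define k where "k = Re a / cmod a"
  define A where "A = cmod a"
  have k: "k > 0" unfolding k_def by (rule k_pos[OF a])
  have lim: "((\<lambda>T. (1 / k) * (T / (T ^ 2 + A ^ 2)) + (1 / k ^ 2) / (T ^ 2 + A ^ 2)) \<longlongrightarrow> 0) at_top"
  proof -
    have l: "((\<lambda>T. (1 / k) * (T / (T ^ 2 + A ^ 2)) + (1 / k ^ 2) / (T ^ 2 + A ^ 2)) \<longlongrightarrow> (1 / k) * 0 + 0) at_top"
      by (intro tendsto_add tendsto_mult tendsto_const lim_t_sq lim_inv_sq)
    thus ?thesis by (simp only: mult_zero_right add_0_right)
  qed
  show ?thesis
  proof (rule Lim_null_comparison[OF _ lim])
    show "eventually (\<lambda>T. norm (PP a T) \<le> (1 / k) * (T / (T ^ 2 + A ^ 2)) + (1 / k ^ 2) / (T ^ 2 + A ^ 2)) at_top"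
      using eventually_ge_at_top[of "0::real"]
    proof eventually_elim
      case (elim T)
      have "norm (PP a T) \<le> norm (of_real (sin T) * gg a T) + norm (of_real (cos T) * g1 a T)"
        unfolding PP_def by (rule norm_triangle_ineq)
      also have "\<dots> = \<bar>sin T\<bar> * cmod (gg a T) + \<bar>cos T\<bar> * cmod (g1 a T)" by (simp add: norm_mult)
      also have "\<dots> \<le> cmod (gg a T) + cmod (g1 a T)"
        by (intro add_mono) (simp_all add: cos_mult_le sin_mult_le)
      also have "\<dots> \<le> T / ((T ^ 2 + A ^ 2) * k) + 1 / ((T ^ 2 + A ^ 2) * k ^ 2)"
        using bnd_gg[OF a elim] bnd_g1[OF a, of T] by (intro add_mono) (simp_all add: k_def A_def)
      also have "\<dots> = (1 / k) * (T / (T ^ 2 + A ^ 2)) + (1 / k ^ 2) / (T ^ 2 + A ^ 2)" by (simp add: mult.commute)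
      finally show ?case .
    qed
  qed
qed

lemma PP0: "Re a > 0 \<Longrightarrow> PP a 0 = 1 / a ^ 2"
  by (auto simp: PP_def g1_def power2_eq_square)

lemma improper_a:
  fixes a :: complex
  assumes a: "Re a > 0"
  obtains L where
    "((\<lambda>T. integral {0..T} (\<lambda>t. of_real (cos t) * gg a t)) \<longlongrightarrow> - 1 / a ^ 2 - L) at_top"
    "\<And>T. T \<ge> 0 \<Longrightarrow> integral {0..T} (\<lambda>t. of_real (cos t) * gg a t) = PP a T - 1 / a ^ 2 - G2 a T"
    "(G2 a \<longlongrightarrow> L) at_top"
    "\<And>T. 0 \<le> T \<Longrightarrow> norm (G2 a T - L) \<le> 3 / ((Re a / cmod a) ^ 3 * (T ^ 2 + (cmod a) ^ 2))"
proof -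
  obtain L where L: "(G2 a \<longlongrightarrow> L) at_top"
    "\<And>T. 0 \<le> T \<Longrightarrow> norm (G2 a T - L) \<le> 3 / ((Re a / cmod a) ^ 3 * (T ^ 2 + (cmod a) ^ 2))"
    using G2_tail[OF a] by blast
  have eq: "integral {0..T} (\<lambda>t. of_real (cos t) * gg a t) = PP a T - 1 / a ^ 2 - G2 a T" if "T \<ge> 0" for T
    using integral_unique[OF int_gg[OF a that]] PP0[OF a] by simp
  have "((\<lambda>T. PP a T - 1 / a ^ 2 - G2 a T) \<longlongrightarrow> 0 - 1 / a ^ 2 - L) at_top"
    by (intro tendsto_intros PP_lim[OF a] L(1))
  hence l1: "((\<lambda>T. PP a T - 1 / a ^ 2 - G2 a T) \<longlongrightarrow> - 1 / a ^ 2 - L) at_top" by simp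
  have ev: "eventually (\<lambda>T. PP a T - 1 / a ^ 2 - G2 a T = integral {0..T} (\<lambda>t. of_real (cos t) * gg a t)) at_top"
    using eventually_ge_at_top[of "0::real"] by eventually_elim (simp add: eq)
  have "((\<lambda>T. integral {0..T} (\<lambda>t. of_real (cos t) * gg a t)) \<longlongrightarrow> - 1 / a ^ 2 - L) at_top"
    by (rule Lim_transform_eventually[OF l1 ev])
  thus ?thesis using that eq L by blast
qed


lemma sumsq: "summable (\<lambda>m::nat. 1 / (real (Suc m))^2)"
proof -
  have "summable (\<lambda>n::nat. inverse (real n ^ 2))" by (rule inverse_power_summable) simp
  hence "summable (\<lambda>n::nat. inverse (real (Suc n) ^ 2))" by (subst summable_Suc_iff)
  thus ?thesis by (simp add: divide_inverse)
qed

locale posU =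
  fixes u :: complex
  assumes u: "Re u > 0"
begin

definition "kap = Re u / cmod u"
definition "aa m = of_nat (Suc m) * u"
definition "SS t = (\<Sum>m. gg (aa m) t)"
definition "cS = 1 / (kap * (cmod u)^2)"

lemma u0: "u \<noteq> 0" using u by auto
lemma kap_pos: "kap > 0" unfolding kap_def by (rule k_pos[OF u])
lemma cS_pos: "cS > 0" unfolding cS_def using kap_pos u0 by simp
lemma Re_aa: "Re (aa m) > 0" using u by (simp add: aa_def)
lemma cmod_aa: "cmod (aa m) = real (Suc m) * cmod u" unfolding aa_def norm_mult norm_of_nat ..
lemma kap_aa: "Re (aa m) / cmod (aa m) = kap"
  by (simp add: aa_def kap_def norm_mult del: of_nat_Suc)
lemma gg_aa: "gg (aa m) t = of_real t / (of_real t ^ 2 + of_nat (Suc m) ^ 2 * u ^ 2)"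
  by (simp add: gg_def aa_def power_mult_distrib)

lemma bnd_gg_aa:
  assumes t: "t \<ge> 0"
  shows "cmod (gg (aa m) t) \<le> t * cS * (1 / (real (Suc m))^2)"
proof -
  have A: "(cmod (aa m))^2 > 0" using Re_aa[of m] by auto
  have "cmod (gg (aa m) t) \<le> t / ((t ^ 2 + (cmod (aa m)) ^ 2) * kap)"
    using bnd_gg[OF Re_aa t] by (simp add: kap_aa)
  also have "\<dots> \<le> t / ((cmod (aa m)) ^ 2 * kap)"
    using t A kap_pos by (intro frac_le mult_right_mono mult_pos_pos) auto
  also have "\<dots> = t * cS * (1 / (real (Suc m))^2)"
    by (simp add: cmod_aa cS_def power_mult_distrib field_simps del: of_nat_Suc)
  finally show ?thesis .
qed

lemma summable_gg:
  assumes t: "t \<ge> 0"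
  shows "summable (\<lambda>m. cmod (gg (aa m) t))"
  by (rule summable_comparison_test[OF _ summable_mult[OF sumsq, of "t * cS"]])
     (use bnd_gg_aa[OF t] in auto)

lemma sums_SS: "t \<ge> 0 \<Longrightarrow> (\<lambda>m. gg (aa m) t) sums SS t"
  unfolding SS_def by (rule summable_sums[OF summable_norm_cancel[OF summable_gg]])

lemma bnd_SS: "t \<ge> 0 \<Longrightarrow> cmod (SS t) \<le> t * cS * (\<Sum>m. 1 / (real (Suc m))^2)"
proof -
  assume t: "t \<ge> 0"
  have "cmod (SS t) \<le> (\<Sum>m. cmod (gg (aa m) t))"
    unfolding SS_def by (rule summable_norm[OF summable_gg[OF t]])
  also have "\<dots> \<le> (\<Sum>m. t * cS * (1 / (real (Suc m))^2))"
    by (rule suminf_le[OF _ summable_gg[OF t] summable_mult[OF sumsq]]) (use bnd_gg_aa[OF t] in auto)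
  also have "\<dots> = t * cS * (\<Sum>m. 1 / (real (Suc m))^2)" by (rule suminf_mult[OF sumsq])
  finally show ?thesis .
qed

lemma integral_SS:
  assumes T: "T \<ge> 0"
  shows "(\<lambda>t. of_real (cos t) * SS t) integrable_on {0..T}"
    "(\<lambda>m. integral {0..T} (\<lambda>t. of_real (cos t) * gg (aa m) t)) sums integral {0..T} (\<lambda>t. of_real (cos t) * SS t)"
proof -
  define C2 where "C2 = (\<Sum>m. 1 / (real (Suc m))^2)"
  define f where "f k t = (\<Sum>m<k. of_real (cos t) * gg (aa m) t)" for k t
  have fi: "f k integrable_on {0..T}" for k
    unfolding f_def by (intro integrable_sum integrable_continuous_interval cont_gg Re_aa) simp
  have hi: "(\<lambda>t. T * cS * C2) integrable_on {0..T}" by (rule integrable_continuous_interval) (rule continuous_on_const)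
  have le: "norm (f k t) \<le> T * cS * C2" if t: "t \<in> {0..T}" for k t
  proof -
    have t0: "t \<ge> 0" using t by simp
    have "norm (f k t) \<le> (\<Sum>m<k. norm (of_real (cos t) * gg (aa m) t))"
      unfolding f_def by (rule norm_sum)
    also have "\<dots> \<le> (\<Sum>m<k. t * cS * (1 / (real (Suc m))^2))"
    proof (rule sum_mono)
      fix m
      have "norm (of_real (cos t) * gg (aa m) t) = \<bar>cos t\<bar> * cmod (gg (aa m) t)" by (simp add: norm_mult)
      also have "\<dots> \<le> cmod (gg (aa m) t)" by (rule cos_mult_le) simp
      also have "\<dots> \<le> t * cS * (1 / (real (Suc m))^2)" by (rule bnd_gg_aa[OF t0])
      finally show "norm (of_real (cos t) * gg (aa m) t) \<le> t * cS * (1 / (real (Suc m))^2)" .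
    qed
    also have "\<dots> = t * cS * (\<Sum>m<k. 1 / (real (Suc m))^2)" by (simp add: sum_distrib_left)
    also have "\<dots> \<le> t * cS * C2"
      unfolding C2_def using t0 cS_pos by (intro mult_left_mono sum_le_suminf[OF sumsq]) auto
    also have "\<dots> \<le> T * cS * C2"
    proof -
      have "C2 \<ge> 0" unfolding C2_def by (intro suminf_nonneg[OF sumsq]) simp
      thus ?thesis using t cS_pos by (intro mult_right_mono) auto
    qed
    finally show ?thesis .
  qed
  have conv: "(\<lambda>k. f k t) \<longlonglongrightarrow> of_real (cos t) * SS t" if t: "t \<in> {0..T}" for t
  proof -
    have "(\<lambda>m. of_real (cos t) * gg (aa m) t) sums (of_real (cos t) * SS t)"
      by (rule sums_mult[OF sums_SS]) (use t in simp)
    thus ?thesis unfolding f_def sums_def .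
  qed
  note dc = dominated_convergence[OF fi hi le conv]
  show "(\<lambda>t. of_real (cos t) * SS t) integrable_on {0..T}" by (rule dc(1))
  have "integral {0..T} (f k) = (\<Sum>m<k. integral {0..T} (\<lambda>t. of_real (cos t) * gg (aa m) t))" for k
    unfolding f_def
    by (rule Henstock_Kurzweil_Integration.integral_sum) (auto intro!: integrable_continuous_interval cont_gg Re_aa)
  thus "(\<lambda>m. integral {0..T} (\<lambda>t. of_real (cos t) * gg (aa m) t)) sums integral {0..T} (\<lambda>t. of_real (cos t) * SS t)"
    using dc(2) unfolding sums_def by simp
qed

end


lemma int_cos:
  assumes "T \<ge> (0::real)"
  shows "((\<lambda>t. of_real (cos t) :: complex) has_integral of_real (sin T)) {0..T}"
proof -
  have "((\<lambda>t. sin (of_real t :: complex)) has_vector_derivative cos (of_real t)) (at t within {0..T})" for t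
    by (rule has_vector_derivative_real_field) (rule DERIV_sin)
  from fundamental_theorem_of_calculus[OF assms this]
  show ?thesis by (simp add: sin_of_real cos_of_real)
qed

lemma lim_exp_inv:
  fixes r c :: real
  assumes r: "r > 0"
  shows "((\<lambda>T. c / (exp (r * T) - 1)) \<longlongrightarrow> 0) at_top"
proof -
  have l: "((\<lambda>x::real. c / (exp x - 1)) \<longlongrightarrow> 0) at_top" by real_asymp
  have f: "filterlim (\<lambda>T. r * T) at_top at_top"
    by (rule filterlim_tendsto_pos_mult_at_top[OF tendsto_const r filterlim_ident])
  show ?thesis using filterlim_compose[OF l f] by simp
qed

context posU
begin

definition "ww = 2 * of_real pi / u"

lemma Re_ww: "Re ww > 0"
proof -
  have "ww = of_real (2 * pi) * inverse u" by (simp add: ww_def divide_inverse)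
  hence "Re ww = 2 * pi * Re (inverse u)" by simp
  thus ?thesis using Re_inverse_pos[OF u] by (metis mult_pos_pos pi_gt_zero zero_less_numeral)
qed

lemma SS_closed: "t > 0 \<Longrightarrow> SS t = ww / 4 + (ww / 2) / (exp (ww * of_real t) - 1) - 1 / (2 * of_real t)"
proof -
  assume t: "t > 0"
  have "(\<lambda>m. gg (aa m) t) sums (ww / 4 + (ww / 2) / (exp (ww * of_real t) - 1) - 1 / (2 * of_real t))"
    using S_closed_form[OF u t] unfolding gg_aa ww_def .
  thus ?thesis using sums_unique2[OF sums_SS] t by simp
qed

lemma SS_lim: "((\<lambda>T. SS T - ww / 4) \<longlongrightarrow> 0) at_top"
proof -
  have l1: "((\<lambda>T. (ww / 2) / (exp (ww * of_real T) - 1)) \<longlongrightarrow> 0) at_top"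
  proof (rule Lim_null_comparison)
    show "((\<lambda>T. (cmod ww / 2) / (exp (Re ww * T) - 1)) \<longlongrightarrow> 0) at_top"
      by (rule lim_exp_inv[OF Re_ww])
    show "eventually (\<lambda>T. norm ((ww / 2) / (exp (ww * of_real T) - 1)) \<le> (cmod ww / 2) / (exp (Re ww * T) - 1)) at_top"
      using eventually_gt_at_top[of "0::real"]
    proof eventually_elim
      case (elim T)
      have p: "exp (Re ww * T) > 1" using Re_ww elim by simp
      have "exp (Re ww * T) - 1 \<le> cmod (exp (ww * of_real T)) - cmod (1::complex)"
        by (simp add: norm_exp_eq_Re)
      also have "\<dots> \<le> cmod (exp (ww * of_real T) - 1)" by (rule norm_triangle_ineq2)
      finally have le: "exp (Re ww * T) - 1 \<le> cmod (exp (ww * of_real T) - 1)" .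
      have n2: "norm (ww / 2) = cmod ww / 2" by (simp add: norm_divide)
      have "norm ((ww / 2) / (exp (ww * of_real T) - 1)) = (cmod ww / 2) / cmod (exp (ww * of_real T) - 1)"
        unfolding norm_divide[of "ww/2"] n2 ..
      also have "\<dots> \<le> (cmod ww / 2) / (exp (Re ww * T) - 1)"
        by (rule frac_le) (use p le in auto)
      finally show ?case .
    qed
  qed
  have l2: "((\<lambda>T. 1 / (2 * of_real T :: complex)) \<longlongrightarrow> 0) at_top"
  proof -
    have "((\<lambda>T. of_real (1 / (2 * T)) :: complex) \<longlongrightarrow> of_real 0) at_top"
      by (intro tendsto_of_real) real_asymp
    thus ?thesis by simp
  qed
  have "((\<lambda>T. (ww / 2) / (exp (ww * of_real T) - 1) - 1 / (2 * of_real T)) \<longlongrightarrow> 0 - 0) at_top"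
    by (rule tendsto_diff[OF l1 l2])
  hence l3: "((\<lambda>T. (ww / 2) / (exp (ww * of_real T) - 1) - 1 / (2 * of_real T)) \<longlongrightarrow> 0) at_top" by simp
  have ev: "eventually (\<lambda>T. (ww / 2) / (exp (ww * of_real T) - 1) - 1 / (2 * of_real T) = SS T - ww / 4) at_top"
    using eventually_gt_at_top[of "0::real"] by eventually_elim (simp add: SS_closed)
  show ?thesis by (rule Lim_transform_eventually[OF l3 ev])
qed

definition "PL m L \<longleftrightarrow> (G2 (aa m) \<longlongrightarrow> L) at_top \<and>
   (\<forall>T\<ge>0. norm (G2 (aa m) T - L) \<le> 3 / (kap ^ 3 * (T ^ 2 + (cmod (aa m)) ^ 2))) \<and>
   ((\<lambda>T. integral {0..T} (\<lambda>t. of_real (cos t) * gg (aa m) t)) \<longlongrightarrow> - 1 / (aa m) ^ 2 - L) at_top \<and>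
   (\<forall>T\<ge>0. integral {0..T} (\<lambda>t. of_real (cos t) * gg (aa m) t) = PP (aa m) T - 1 / (aa m) ^ 2 - G2 (aa m) T)"

definition "LL = (SOME Lf. \<forall>m. PL m (Lf m))"

lemma LL_props: "PL m (LL m)"
proof -
  have "\<forall>m. \<exists>L. PL m L"
  proof
    fix m
    obtain L where L:
      "((\<lambda>T. integral {0..T} (\<lambda>t. of_real (cos t) * gg (aa m) t)) \<longlongrightarrow> - 1 / (aa m) ^ 2 - L) at_top"
      "\<And>T. T \<ge> 0 \<Longrightarrow> integral {0..T} (\<lambda>t. of_real (cos t) * gg (aa m) t) = PP (aa m) T - 1 / (aa m) ^ 2 - G2 (aa m) T"
      "(G2 (aa m) \<longlongrightarrow> L) at_top"
      "\<And>T. 0 \<le> T \<Longrightarrow> norm (G2 (aa m) T - L) \<le> 3 / ((Re (aa m) / cmod (aa m)) ^ 3 * (T ^ 2 + (cmod (aa m)) ^ 2))"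
      using improper_a[OF Re_aa[of m]] by blast
    show "\<exists>L. PL m L" unfolding PL_def using L by (auto simp: kap_aa)
  qed
  hence "\<exists>Lf. \<forall>m. PL m (Lf m)" by (rule choice)
  hence "\<forall>m. PL m (LL m)" unfolding LL_def by (rule someI_ex)
  thus ?thesis by blast
qed

lemma LL_lim: "(G2 (aa m) \<longlongrightarrow> LL m) at_top" using LL_props[of m] by (simp add: PL_def)
lemma LL_bnd: "T \<ge> 0 \<Longrightarrow> norm (G2 (aa m) T - LL m) \<le> 3 / (kap ^ 3 * (T ^ 2 + (cmod (aa m)) ^ 2))"
  using LL_props[of m] by (simp add: PL_def)
lemma LL_int: "((\<lambda>T. integral {0..T} (\<lambda>t. of_real (cos t) * gg (aa m) t)) \<longlongrightarrow> - 1 / (aa m) ^ 2 - LL m) at_top"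
  using LL_props[of m] by (simp add: PL_def)
lemma LL_eq: "T \<ge> 0 \<Longrightarrow> integral {0..T} (\<lambda>t. of_real (cos t) * gg (aa m) t) = PP (aa m) T - 1 / (aa m) ^ 2 - G2 (aa m) T"
  using LL_props[of m] by (simp add: PL_def)

definition "Fm m = - 1 / (aa m) ^ 2 - LL m"

lemma G2_0: "G2 a 0 = 0" by (simp add: G2_def)

lemma bnd_G2L: "T \<ge> 0 \<Longrightarrow> norm (G2 (aa m) T - LL m) \<le> (3 / (kap ^ 3 * (cmod u)^2)) * (1 / (real (Suc m))^2)"
proof -
  assume T: "T \<ge> 0"
  have A: "(cmod (aa m))^2 > 0" using Re_aa[of m] by auto
  have "norm (G2 (aa m) T - LL m) \<le> 3 / (kap ^ 3 * (T ^ 2 + (cmod (aa m)) ^ 2))" by (rule LL_bnd[OF T])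
  also have "\<dots> \<le> 3 / (kap ^ 3 * (cmod (aa m)) ^ 2)"
    using A kap_pos T by (intro frac_le mult_left_mono mult_pos_pos) auto
  also have "\<dots> = (3 / (kap ^ 3 * (cmod u)^2)) * (1 / (real (Suc m))^2)"
    by (simp add: cmod_aa power_mult_distrib field_simps del: of_nat_Suc)
  finally show ?thesis .
qed

lemma bnd_g1_aa: "norm (g1 (aa m) T) \<le> (1 / (kap ^ 2 * (cmod u)^2)) * (1 / (real (Suc m))^2)"
proof -
  have A: "(cmod (aa m))^2 > 0" using Re_aa[of m] by auto
  have "norm (g1 (aa m) T) \<le> 1 / ((T ^ 2 + (cmod (aa m)) ^ 2) * kap ^ 2)"
    using bnd_g1[OF Re_aa, of m T] by (simp add: kap_aa)
  also have "\<dots> \<le> 1 / ((cmod (aa m)) ^ 2 * kap ^ 2)"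
    using A kap_pos by (intro frac_le mult_right_mono mult_pos_pos) auto
  also have "\<dots> = (1 / (kap ^ 2 * (cmod u)^2)) * (1 / (real (Suc m))^2)"
    by (simp add: cmod_aa power_mult_distrib field_simps del: of_nat_Suc)
  finally show ?thesis .
qed

lemma bnd_Fm: "norm (Fm m) \<le> (1 / (cmod u)^2 + 3 / (kap ^ 3 * (cmod u)^2)) * (1 / (real (Suc m))^2)"
proof -
  have "norm (Fm m) \<le> norm (1 / (aa m) ^ 2) + norm (LL m)"
    unfolding Fm_def using norm_triangle_ineq4[of "- 1 / (aa m) ^ 2" "LL m"] by (simp add: norm_divide)
  also have "norm (1 / (aa m) ^ 2) = (1 / (cmod u)^2) * (1 / (real (Suc m))^2)"
    by (simp add: norm_divide norm_power cmod_aa power_mult_distrib del: of_nat_Suc)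
  also have "norm (LL m) \<le> (3 / (kap ^ 3 * (cmod u)^2)) * (1 / (real (Suc m))^2)"
    using bnd_G2L[of 0 m] by (simp add: G2_0)
  finally show ?thesis by (simp add: algebra_simps)
qed

lemma summable_Fm: "summable Fm"
  by (rule summable_norm_cancel, rule summable_comparison_test[OF _ summable_mult[OF sumsq]])
     (use bnd_Fm in auto)

definition "Phi = suminf Fm"


lemma lim_inv_sq3: "((\<lambda>T::real. c / ((T ^ 2 + d) * e)) \<longlongrightarrow> 0) at_top"
proof (cases "e = 0")
  case True thus ?thesis by simp
next
  case False
  have "(\<lambda>T::real. c / ((T ^ 2 + d) * e)) = (\<lambda>T. (c / e) / (T ^ 2 + d))"
    using False by (auto simp: divide_divide_eq_left mult.commute)
  thus ?thesis using lim_inv_sq[of "c / e" d] by simp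
qed

lemma g1_lim: "((\<lambda>T. g1 (aa m) T) \<longlongrightarrow> 0) at_top"
proof (rule Lim_null_comparison[OF _ lim_inv_sq3[of 1 "(cmod (aa m))^2" "(Re (aa m) / cmod (aa m)) ^ 2"]])
  show "eventually (\<lambda>T. norm (g1 (aa m) T) \<le> 1 / ((T ^ 2 + (cmod (aa m))^2) * (Re (aa m) / cmod (aa m)) ^ 2)) at_top"
    by (rule always_eventually) (use bnd_g1[OF Re_aa] in auto)
qed

lemma tannery0:
  fixes a :: "nat \<Rightarrow> real \<Rightarrow> complex"
  assumes lim: "\<And>m. ((\<lambda>T. a m T) \<longlongrightarrow> 0) at_top"
    and bnd: "\<And>m T. T \<ge> 0 \<Longrightarrow> norm (a m T) \<le> c * (1 / (real (Suc m))^2)"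
  shows "((\<lambda>T. \<Sum>m. a m T) \<longlongrightarrow> 0) at_top"
proof -
  have ev: "eventually (\<lambda>(m, T). norm (a m T) \<le> c * (1 / (real (Suc m))^2)) (at_top \<times>\<^sub>F at_top)"
    unfolding eventually_prod_filter
    by (rule exI[of _ "\<lambda>_. True"], rule exI[of _ "\<lambda>T. T \<ge> 0"]) (use bnd in \<open>auto simp del: of_nat_Suc\<close>)
  have "((\<lambda>T. \<Sum>m. a m T) \<longlongrightarrow> (\<Sum>m. (0::complex))) at_top"
    using tannerys_theorem[OF lim ev summable_mult[OF sumsq]] by simp
  thus ?thesis by simp
qed

lemma claimA: "((\<lambda>T. integral {0..T} (\<lambda>t. of_real (cos t) * (SS t - ww / 4))) \<longlongrightarrow> Phi) at_top"
proof -
  define X where "X T = (\<Sum>m. g1 (aa m) T)" for T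
  define Y where "Y T = (\<Sum>m. G2 (aa m) T - LL m)" for T
  have X0: "(X \<longlongrightarrow> 0) at_top" unfolding X_def
    by (rule tannery0[OF g1_lim bnd_g1_aa])
  have Y0: "(Y \<longlongrightarrow> 0) at_top" unfolding Y_def
  proof (rule tannery0[OF _ bnd_G2L])
    fix m show "((\<lambda>T. G2 (aa m) T - LL m) \<longlongrightarrow> 0) at_top"
      using tendsto_diff[OF LL_lim[of m] tendsto_const[of "LL m"]] by simp
  qed
  have key: "integral {0..T} (\<lambda>t. of_real (cos t) * (SS t - ww / 4)) - Phi =
     of_real (sin T) * (SS T - ww / 4) + of_real (cos T) * X T - Y T" if T: "T \<ge> 0" for T
  proof -
    have s3: "(\<lambda>m. integral {0..T} (\<lambda>t. of_real (cos t) * gg (aa m) t) - Fm m) sums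
        (integral {0..T} (\<lambda>t. of_real (cos t) * SS t) - Phi)"
      by (rule sums_diff[OF integral_SS(2)[OF T]]) (unfold Phi_def, rule summable_sums[OF summable_Fm])
    have eqm: "integral {0..T} (\<lambda>t. of_real (cos t) * gg (aa m) t) - Fm m =
        (of_real (sin T) * gg (aa m) T + of_real (cos T) * g1 (aa m) T) - (G2 (aa m) T - LL m)" for m
      by (simp add: LL_eq[OF T] Fm_def PP_def)
    have s4: "(\<lambda>m. of_real (sin T) * gg (aa m) T) sums (of_real (sin T) * SS T)"
      by (rule sums_mult[OF sums_SS[OF T]])
    have s5: "(\<lambda>m. of_real (cos T) * g1 (aa m) T) sums (of_real (cos T) * X T)"
      unfolding X_def
      by (rule sums_mult, rule summable_sums, rule summable_norm_cancel,
          rule summable_comparison_test[OF _ summable_mult[OF sumsq, of "1 / (kap ^ 2 * (cmod u)^2)"]])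
         (use bnd_g1_aa in \<open>auto simp del: of_nat_Suc\<close>)
    have s6: "(\<lambda>m. G2 (aa m) T - LL m) sums Y T"
      unfolding Y_def
      by (rule summable_sums, rule summable_norm_cancel,
          rule summable_comparison_test[OF _ summable_mult[OF sumsq, of "3 / (kap ^ 3 * (cmod u)^2)"]])
         (use bnd_G2L[OF T] in \<open>auto simp del: of_nat_Suc\<close>)
    have "(\<lambda>m. (of_real (sin T) * gg (aa m) T + of_real (cos T) * g1 (aa m) T) - (G2 (aa m) T - LL m)) sums
        (of_real (sin T) * SS T + of_real (cos T) * X T - Y T)"
      by (intro sums_diff sums_add s4 s5 s6)
    hence "integral {0..T} (\<lambda>t. of_real (cos t) * SS t) - Phi = of_real (sin T) * SS T + of_real (cos T) * X T - Y T"
      using s3 unfolding eqm by (rule sums_unique2[symmetric])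
    moreover have "integral {0..T} (\<lambda>t. of_real (cos t) * (SS t - ww / 4)) =
        integral {0..T} (\<lambda>t. of_real (cos t) * SS t) - ww / 4 * of_real (sin T)"
    proof -
      have i1: "((\<lambda>t. of_real (cos t) * SS t) has_integral integral {0..T} (\<lambda>t. of_real (cos t) * SS t)) {0..T}"
        by (rule integrable_integral[OF integral_SS(1)[OF T]])
      have i2: "((\<lambda>t. ww / 4 * of_real (cos t)) has_integral ww / 4 * of_real (sin T)) {0..T}"
        by (rule has_integral_mult_right[OF int_cos[OF T]])
      have "((\<lambda>t. of_real (cos t) * SS t - ww / 4 * of_real (cos t)) has_integral
          integral {0..T} (\<lambda>t. of_real (cos t) * SS t) - ww / 4 * of_real (sin T)) {0..T}"
        by (rule has_integral_diff[OF i1 i2])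
      hence "((\<lambda>t. of_real (cos t) * (SS t - ww / 4)) has_integral
          integral {0..T} (\<lambda>t. of_real (cos t) * SS t) - ww / 4 * of_real (sin T)) {0..T}"
        by (simp add: algebra_simps)
      thus ?thesis by (rule integral_unique)
    qed
    ultimately show ?thesis by (simp add: algebra_simps)
  qed
  have bsin: "((\<lambda>T. of_real (sin T) * (SS T - ww / 4)) \<longlongrightarrow> 0) at_top"
  proof (rule Lim_null_comparison[OF _ tendsto_norm_zero[OF SS_lim]])
    show "eventually (\<lambda>T. norm (of_real (sin T) * (SS T - ww / 4)) \<le> norm (SS T - ww / 4)) at_top"
      by (rule always_eventually) (simp add: norm_mult sin_mult_le)
  qed
  have bcos: "((\<lambda>T. of_real (cos T) * X T) \<longlongrightarrow> 0) at_top"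
  proof (rule Lim_null_comparison[OF _ tendsto_norm_zero[OF X0]])
    show "eventually (\<lambda>T. norm (of_real (cos T) * X T) \<le> norm (X T)) at_top"
      by (rule always_eventually) (simp add: norm_mult cos_mult_le)
  qed
  have "((\<lambda>T. of_real (sin T) * (SS T - ww / 4) + of_real (cos T) * X T - Y T) \<longlongrightarrow> 0 + 0 - 0) at_top"
    by (intro tendsto_diff tendsto_add bsin bcos Y0)
  hence l: "((\<lambda>T. of_real (sin T) * (SS T - ww / 4) + of_real (cos T) * X T - Y T + Phi) \<longlongrightarrow> Phi) at_top"
    using tendsto_add[OF _ tendsto_const[of Phi]] by fastforce
  have ev: "eventually (\<lambda>T. of_real (sin T) * (SS T - ww / 4) + of_real (cos T) * X T - Y T + Phi =
      integral {0..T} (\<lambda>t. of_real (cos t) * (SS t - ww / 4))) at_top"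
    using eventually_ge_at_top[of "0::real"] by eventually_elim (simp add: key[symmetric])
  show ?thesis by (rule Lim_transform_eventually[OF l ev])
qed

end


definition Acs :: "complex \<Rightarrow> real \<Rightarrow> complex" where
  "Acs c t = exp (- (c * of_real t)) * (of_real (sin t) - c * of_real (cos t)) / (1 + c ^ 2)"

lemma ring2: "K * ((- c * E) * (S - c * C) + (C + c * S) * E) = (E * C) * (K * (1 + c ^ 2))"
  for c E S C K :: complex
  by (simp add: algebra_simps power2_eq_square)

lemma cosexp_int:
  fixes c :: complex and T :: real
  assumes c: "1 + c ^ 2 \<noteq> 0" and T: "T \<ge> 0"
  shows "((\<lambda>t. of_real (cos t) * exp (- (c * of_real t))) has_integral (Acs c T - Acs c 0)) {0..T}"
proof -
  define K where "K = inverse (1 + c ^ 2)"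
  define Q where "Q z = K * (exp (- (c * z)) * (sin z - c * cos z))" for z
  have dQ: "(Q has_field_derivative exp (- (c * z)) * cos z) (at z)" for z
  proof -
    have d1: "((\<lambda>z. exp (- (c * z))) has_field_derivative (- c * exp (- (c * z)))) (at z)"
      by (auto intro!: derivative_eq_intros)
    have d2: "((\<lambda>z. sin z - c * cos z) has_field_derivative (cos z + c * sin z)) (at z)"
      by (auto intro!: derivative_eq_intros)
    have "(Q has_field_derivative K * ((- c * exp (- (c * z))) * (sin z - c * cos z) + (cos z + c * sin z) * exp (- (c * z)))) (at z)"
      unfolding Q_def by (intro DERIV_cmult DERIV_mult d1 d2)
    also have "K * ((- c * exp (- (c * z))) * (sin z - c * cos z) + (cos z + c * sin z) * exp (- (c * z)))
        = exp (- (c * z)) * cos z"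
      unfolding ring2 using c by (simp add: K_def)
    finally show ?thesis .
  qed
  have vd: "((\<lambda>t. Q (of_real t)) has_vector_derivative exp (- (c * of_real t)) * cos (of_real t)) (at t within {0..T})" for t
    by (rule has_vector_derivative_real_field[OF dQ])
  from fundamental_theorem_of_calculus[OF T vd]
  have "((\<lambda>t. exp (- (c * of_real t)) * cos (of_real t)) has_integral Q (of_real T) - Q (of_real 0)) {0..T}" .
  moreover have "Q (of_real t) = Acs c t" for t by (simp add: Q_def Acs_def K_def sin_of_real cos_of_real divide_inverse mult.commute)
  moreover have "Q 0 = Acs c 0" by (simp add: Q_def Acs_def K_def divide_inverse mult.commute)
  ultimately show ?thesis by (simp add: cos_of_real mult.commute)
qed

lemma Acs0: "Acs c 0 = - c / (1 + c ^ 2)" by (simp add: Acs_def)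

lemma norm_sin_minus: "cmod (of_real (sin t) - c * of_real (cos t)) \<le> 1 + cmod c"
proof -
  have "cmod (of_real (sin t) - c * of_real (cos t)) \<le> cmod (of_real (sin t) :: complex) + cmod (c * of_real (cos t))"
    by (rule norm_triangle_ineq4)
  also have "\<dots> = \<bar>sin t\<bar> + cmod c * \<bar>cos t\<bar>" by (simp add: norm_mult)
  also have "\<dots> \<le> 1 + cmod c * 1" by (intro add_mono mult_left_mono) auto
  finally show ?thesis by simp
qed

lemma norm_Acs: "cmod (Acs c t) = exp (- (Re c * t)) * cmod (of_real (sin t) - c * of_real (cos t)) / cmod (1 + c ^ 2)"
  by (simp add: Acs_def norm_divide norm_mult norm_exp_eq_Re)

lemma Acs_lim:
  assumes c: "Re c > 0"
  shows "(Acs c \<longlongrightarrow> 0) at_top"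
proof (rule Lim_null_comparison)
  show "((\<lambda>t. exp (- (Re c * t)) * ((1 + cmod c) / cmod (1 + c ^ 2))) \<longlongrightarrow> 0) at_top"
  proof -
    have "((\<lambda>t. exp (- (Re c * t))) \<longlongrightarrow> 0) at_top"
    proof -
      have l: "((\<lambda>x::real. exp (- x)) \<longlongrightarrow> 0) at_top" by real_asymp
      have f: "filterlim (\<lambda>T. Re c * T) at_top at_top"
        by (rule filterlim_tendsto_pos_mult_at_top[OF tendsto_const c filterlim_ident])
      show ?thesis using filterlim_compose[OF l f] by simp
    qed
    from tendsto_mult[OF this tendsto_const[of "(1 + cmod c) / cmod (1 + c ^ 2)"]]
    show ?thesis by (simp only: mult_zero_left)
  qed
  show "eventually (\<lambda>t. norm (Acs c t) \<le> exp (- (Re c * t)) * ((1 + cmod c) / cmod (1 + c ^ 2))) at_top"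
  proof (rule always_eventually, rule allI)
    fix t
    have "norm (Acs c t) = exp (- (Re c * t)) * (cmod (of_real (sin t) - c * of_real (cos t)) / cmod (1 + c ^ 2))"
      by (simp add: norm_Acs)
    also have "\<dots> \<le> exp (- (Re c * t)) * ((1 + cmod c) / cmod (1 + c ^ 2))"
      by (intro mult_left_mono divide_right_mono norm_sin_minus) auto
    finally show "norm (Acs c t) \<le> exp (- (Re c * t)) * ((1 + cmod c) / cmod (1 + c ^ 2))" .
  qed
qed

lemma one_plus_sq_nz:
  fixes c :: complex
  assumes "Re c > 0"
  shows "1 + c ^ 2 \<noteq> 0"
  using D_nz[OF assms, of 1] by simp

lemma cosexp_lim:
  assumes c: "Re c > 0"
  shows "((\<lambda>T. integral {0..T} (\<lambda>t. of_real (cos t) * exp (- (c * of_real t)))) \<longlongrightarrow> c / (1 + c ^ 2)) at_top"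
proof -
  have l: "((\<lambda>T. Acs c T - Acs c 0) \<longlongrightarrow> 0 - (- c / (1 + c ^ 2))) at_top"
    unfolding Acs0 by (intro tendsto_diff Acs_lim[OF c] tendsto_const)
  have ev: "eventually (\<lambda>T. Acs c T - Acs c 0 = integral {0..T} (\<lambda>t. of_real (cos t) * exp (- (c * of_real t)))) at_top"
    using eventually_ge_at_top[of "0::real"]
    by eventually_elim (simp add: integral_unique[OF cosexp_int[OF one_plus_sq_nz[OF c]]])
  show ?thesis using Lim_transform_eventually[OF l ev] by simp
qed

lemma int_exp_neg:
  fixes r T :: real
  assumes r: "r > 0" and T: "T \<ge> 0"
  shows "((\<lambda>t. exp (- (r * t))) has_integral (1 - exp (- (r * T))) / r) {0..T}"
proof -
  have "((\<lambda>t. - exp (- (r * t)) / r) has_real_derivative exp (- (r * t))) (at t within {0..T})" for t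
    using r by (auto intro!: derivative_eq_intros)
  hence "((\<lambda>t. exp (- (r * t))) has_integral (- exp (- (r * T)) / r - (- exp (- (r * 0)) / r))) {0..T}"
    using T by (intro fundamental_theorem_of_calculus) (auto simp: has_real_derivative_iff_has_vector_derivative)
  thus ?thesis by (simp add: diff_divide_distrib add.commute)
qed

lemma int_exp_neg_le:
  fixes r T :: real
  assumes r: "r > 0" and T: "T \<ge> 0"
  shows "integral {0..T} (\<lambda>t. exp (- (r * t))) \<le> 1 / r"
proof -
  have "integral {0..T} (\<lambda>t. exp (- (r * t))) = (1 - exp (- (r * T))) / r"
    by (rule integral_unique[OF int_exp_neg[OF r T]])
  also have "\<dots> \<le> 1 / r" using r by (intro divide_right_mono) auto
  finally show ?thesis .
qed


definition Vf :: "complex \<Rightarrow> real \<Rightarrow> complex" where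
  "Vf \<alpha> t = integral {0..1} (\<lambda>l. \<alpha> * exp (- (of_real l * \<alpha> * of_real t)))"

lemma Vf0: "Vf \<alpha> 0 = \<alpha>"
  by (simp add: Vf_def)

lemma Vf_pos:
  assumes t: "t \<noteq> 0"
  shows "Vf \<alpha> t = (1 - exp (- (\<alpha> * of_real t))) / of_real t"
proof -
  define F where "F z = - exp (- (z * \<alpha> * of_real t)) / of_real t" for z :: complex
  have dF: "(F has_field_derivative \<alpha> * exp (- (z * \<alpha> * of_real t))) (at z)" for z
  proof -
    have "(F has_field_derivative - (exp (- (z * \<alpha> * of_real t)) * (- (\<alpha> * of_real t))) / of_real t) (at z)"
      unfolding F_def by (auto intro!: derivative_eq_intros)
    also have "- (exp (- (z * \<alpha> * of_real t)) * (- (\<alpha> * of_real t))) / of_real t = \<alpha> * exp (- (z * \<alpha> * of_real t))"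
      using t by (simp add: field_simps)
    finally show ?thesis .
  qed
  have vd: "((\<lambda>l. F (of_real l)) has_vector_derivative \<alpha> * exp (- (of_real l * \<alpha> * of_real t))) (at l within {0..1})" for l
    by (rule has_vector_derivative_real_field[OF dF])
  have "((\<lambda>l. \<alpha> * exp (- (of_real l * \<alpha> * of_real t))) has_integral F (of_real 1) - F (of_real 0)) {0..1}"
    by (rule fundamental_theorem_of_calculus[OF _ vd]) simp
  hence "((\<lambda>l. \<alpha> * exp (- (of_real l * \<alpha> * of_real t))) has_integral F 1 - F 0) {0..1}"
    by (simp only: of_real_1 of_real_0)
  hence "Vf \<alpha> t = F 1 - F 0" unfolding Vf_def by (rule integral_unique)
  also have "\<dots> = (1 - exp (- (\<alpha> * of_real t))) / of_real t"
    using t by (simp add: F_def field_simps)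
  finally show ?thesis .
qed

lemma Vf_cont: "continuous_on S (Vf \<alpha>)"
proof -
  have "continuous_on (S \<times> cbox 0 1) (\<lambda>(t, l). \<alpha> * exp (- (of_real l * \<alpha> * of_real t)))"
    by (auto intro!: continuous_intros simp: case_prod_unfold)
  from integral_continuous_on_param[OF this]
  show ?thesis unfolding Vf_def cbox_interval[symmetric] by (simp add: case_prod_unfold)
qed

lemma not_nonpos_sq:
  fixes \<alpha> :: complex and l :: real
  assumes a: "Re \<alpha> > 0"
  shows "1 + (of_real l * \<alpha>) ^ 2 \<notin> \<real>\<^sub>\<le>\<^sub>0"
proof
  assume "1 + (of_real l * \<alpha>) ^ 2 \<in> \<real>\<^sub>\<le>\<^sub>0"
  hence im: "Im (1 + (of_real l * \<alpha>) ^ 2) = 0" and re: "Re (1 + (of_real l * \<alpha>) ^ 2) \<le> 0"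
    by (auto simp: complex_nonpos_Reals_iff)
  have im': "Im (1 + (of_real l * \<alpha>) ^ 2) = 2 * (l * l) * Re \<alpha> * Im \<alpha>"
    by (simp add: power2_eq_square algebra_simps)
  have re': "Re (1 + (of_real l * \<alpha>) ^ 2) = 1 + (l * l) * (Re \<alpha> * Re \<alpha> - Im \<alpha> * Im \<alpha>)"
    by (simp add: power2_eq_square algebra_simps)
  have "l * l = 0 \<or> Im \<alpha> = 0" using im im' a by simp
  thus False
  proof
    assume "l * l = 0" thus False using re re' by simp
  next
    assume "Im \<alpha> = 0"
    hence "Re (1 + (of_real l * \<alpha>) ^ 2) = 1 + (l * l) * (Re \<alpha> * Re \<alpha>)" using re' by simp
    moreover have "(l * l) * (Re \<alpha> * Re \<alpha>) \<ge> 0" by simp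
    ultimately show False using re by linarith
  qed
qed

lemma sq_nz: "Re \<alpha> > 0 \<Longrightarrow> 1 + (of_real l * \<alpha>) ^ 2 \<noteq> 0"
  using not_nonpos_sq[of \<alpha> l] by auto

lemma alg7: "(D::complex) \<noteq> 0 \<Longrightarrow> (inverse D * (2 * (x * a) * a)) / 2 = x * a ^ 2 / D"
  by (simp add: field_simps power2_eq_square)

lemma Ln_int:
  fixes \<alpha> :: complex
  assumes a: "Re \<alpha> > 0"
  shows "((\<lambda>l. of_real l * \<alpha> ^ 2 / (1 + (of_real l * \<alpha>) ^ 2)) has_integral Ln (1 + \<alpha> ^ 2) / 2) {0..1}"
proof -
  define G where "G z = Ln (1 + (z * \<alpha>) ^ 2) / 2" for z :: complex
  have dG: "(G has_field_derivative of_real l * \<alpha> ^ 2 / (1 + (of_real l * \<alpha>) ^ 2)) (at (of_real l))" for l :: real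
  proof -
    have d1: "((\<lambda>z. 1 + (z * \<alpha>) ^ 2) has_field_derivative 2 * (of_real l * \<alpha>) * \<alpha>) (at (of_real l))"
      by (auto intro!: derivative_eq_intros)
    have d2: "(Ln has_field_derivative inverse (1 + (of_real l * \<alpha>) ^ 2)) (at (1 + (of_real l * \<alpha>) ^ 2))"
      by (rule has_field_derivative_Ln[OF not_nonpos_sq[OF a]])
    have "(G has_field_derivative (inverse (1 + (of_real l * \<alpha>) ^ 2) * (2 * (of_real l * \<alpha>) * \<alpha>)) / 2) (at (of_real l))"
      unfolding G_def by (intro DERIV_cdivide DERIV_chain2[OF d2 d1])
    also have "(inverse (1 + (of_real l * \<alpha>) ^ 2) * (2 * (of_real l * \<alpha>) * \<alpha>)) / 2
        = of_real l * \<alpha> ^ 2 / (1 + (of_real l * \<alpha>) ^ 2)"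
      by (rule alg7[OF sq_nz[OF a, of l]])
    finally show ?thesis .
  qed
  have vd: "((\<lambda>l. G (of_real l)) has_vector_derivative of_real l * \<alpha> ^ 2 / (1 + (of_real l * \<alpha>) ^ 2)) (at l within {0..1})" for l
    by (rule has_vector_derivative_real_field[OF dG])
  have "((\<lambda>l. of_real l * \<alpha> ^ 2 / (1 + (of_real l * \<alpha>) ^ 2)) has_integral G (of_real 1) - G (of_real 0)) {0..1}"
    by (rule fundamental_theorem_of_calculus[OF _ vd]) simp
  thus ?thesis by (simp add: G_def)
qed


lemma sq_nz01: "Re \<alpha> > 0 \<Longrightarrow> 1 + (of_real l * \<alpha>) ^ 2 \<noteq> 0" by (rule sq_nz)

lemma JT_eq:
  fixes \<alpha> :: complex and T :: real
  assumes a: "Re \<alpha> > 0" and T: "T \<ge> 0"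
  shows "integral {0..T} (\<lambda>t. of_real (cos t) * Vf \<alpha> t) =
         integral {0..1} (\<lambda>l. \<alpha> * (Acs (of_real l * \<alpha>) T - Acs (of_real l * \<alpha>) 0))"
proof -
  define f where "f t l = of_real (cos t) * (\<alpha> * exp (- (of_real l * \<alpha> * of_real t)))" for t l :: real
  have c: "continuous_on (cbox (0, 0) (T, 1)) (\<lambda>(t, l). f t l)"
    unfolding f_def by (auto intro!: continuous_intros simp: case_prod_unfold)
  have "integral {0..T} (\<lambda>t. of_real (cos t) * Vf \<alpha> t) = integral (cbox 0 T) (\<lambda>t. integral (cbox 0 1) (f t))"
    unfolding Vf_def f_def cbox_interval by simp
  also have "\<dots> = integral (cbox 0 1) (\<lambda>l. integral (cbox 0 T) (\<lambda>t. f t l))"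
    by (rule integral_swap_continuous[OF c])
  also have "\<dots> = integral {0..1} (\<lambda>l. \<alpha> * (Acs (of_real l * \<alpha>) T - Acs (of_real l * \<alpha>) 0))"
    unfolding cbox_interval
  proof (rule integral_cong)
    fix l :: real assume l: "l \<in> {0..1}"
    have "integral {0..T} (\<lambda>t. f t l) = \<alpha> * integral {0..T} (\<lambda>t. of_real (cos t) * exp (- ((of_real l * \<alpha>) * of_real t)))"
      unfolding f_def by (simp add: algebra_simps)
    also have "\<dots> = \<alpha> * (Acs (of_real l * \<alpha>) T - Acs (of_real l * \<alpha>) 0)"
      by (simp add: integral_unique[OF cosexp_int[OF sq_nz[OF a] T]])
    finally show "integral {0..T} (\<lambda>t. f t l) = \<alpha> * (Acs (of_real l * \<alpha>) T - Acs (of_real l * \<alpha>) 0)" .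
  qed
  finally show ?thesis .
qed

lemma lbk:
  fixes \<alpha> :: complex and l :: real
  assumes a: "Re \<alpha> > 0" and l: "l \<ge> 0"
  shows "cmod (1 + (of_real l * \<alpha>) ^ 2) \<ge> Re \<alpha> / cmod \<alpha>"
proof (cases "l = 0")
  case True thus ?thesis using k_le1[OF a] by simp
next
  case False
  hence lp: "l > 0" using l by simp
  define a' where "a' = of_real l * \<alpha>"
  have ra: "Re a' > 0" using lp a by (simp add: a'_def)
  have ka: "Re a' / cmod a' = Re \<alpha> / cmod \<alpha>" using lp by (simp add: a'_def norm_mult)
  have "Re \<alpha> / cmod \<alpha> \<le> (1 + (cmod a') ^ 2) * (Re \<alpha> / cmod \<alpha>)"
    using k_pos[OF a] by (intro mult_le_cancel_right1[THEN iffD2] impI) auto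
  also have "\<dots> = (1 ^ 2 + (cmod a') ^ 2) * (Re a' / cmod a')" by (simp add: ka)
  also have "\<dots> \<le> cmod (of_real 1 ^ 2 + a' ^ 2)" by (rule lowbnd[OF ra])
  finally show ?thesis by (simp add: a'_def)
qed

lemma JT_lim:
  fixes \<alpha> :: complex
  assumes a: "Re \<alpha> > 0"
  shows "((\<lambda>T. integral {0..T} (\<lambda>t. of_real (cos t) * Vf \<alpha> t)) \<longlongrightarrow> Ln (1 + \<alpha> ^ 2) / 2) at_top"
proof -
  define kk where "kk = Re \<alpha> / cmod \<alpha>"
  have kk: "kk > 0" unfolding kk_def by (rule k_pos[OF a])
  define C where "C = cmod \<alpha> * (1 + cmod \<alpha>) / kk"
  define R where "R T = integral {0..1} (\<lambda>l. \<alpha> * Acs (of_real l * \<alpha>) T)" for T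
  have contA: "continuous_on {0..1} (\<lambda>l. \<alpha> * Acs (of_real l * \<alpha>) T)" for T
    unfolding Acs_def by (auto intro!: continuous_intros simp: sq_nz[OF a])
  have eq: "integral {0..T} (\<lambda>t. of_real (cos t) * Vf \<alpha> t) = R T + Ln (1 + \<alpha> ^ 2) / 2" if T: "T \<ge> 0" for T
  proof -
    have i1: "((\<lambda>l. \<alpha> * Acs (of_real l * \<alpha>) T) has_integral R T) {0..1}"
      unfolding R_def by (rule integrable_integral[OF integrable_continuous_interval[OF contA]])
    have "((\<lambda>l. \<alpha> * Acs (of_real l * \<alpha>) T + of_real l * \<alpha> ^ 2 / (1 + (of_real l * \<alpha>) ^ 2)) has_integral
        R T + Ln (1 + \<alpha> ^ 2) / 2) {0..1}"
      by (rule has_integral_add[OF i1 Ln_int[OF a]])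
    moreover have "\<alpha> * Acs (of_real l * \<alpha>) T + of_real l * \<alpha> ^ 2 / (1 + (of_real l * \<alpha>) ^ 2)
        = \<alpha> * (Acs (of_real l * \<alpha>) T - Acs (of_real l * \<alpha>) 0)" for l
      by (simp add: Acs0 algebra_simps power2_eq_square)
    ultimately have "((\<lambda>l. \<alpha> * (Acs (of_real l * \<alpha>) T - Acs (of_real l * \<alpha>) 0)) has_integral
        R T + Ln (1 + \<alpha> ^ 2) / 2) {0..1}" by simp
    thus ?thesis unfolding JT_eq[OF a T] by (rule integral_unique)
  qed
  have bnd: "norm (R T) \<le> C * (1 / (Re \<alpha> * T))" if T: "T > 0" for T
  proof -
    have r: "Re \<alpha> * T > 0" using a T by simp
    have "norm (R T) \<le> integral {0..1} (\<lambda>l. C * exp (- ((Re \<alpha> * T) * l)))"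
      unfolding R_def
    proof (rule integral_norm_bound_integral)
      show "(\<lambda>l. \<alpha> * Acs (of_real l * \<alpha>) T) integrable_on {0..1}"
        by (rule integrable_continuous_interval[OF contA])
      show "(\<lambda>l. C * exp (- ((Re \<alpha> * T) * l))) integrable_on {0..1}"
        by (intro integrable_continuous_interval continuous_intros)
      fix l :: real assume l: "l \<in> {0..1}"
      have lb: "kk \<le> cmod (1 + (of_real l * \<alpha>) ^ 2)" unfolding kk_def by (rule lbk[OF a]) (use l in simp)
      have ns: "cmod (of_real (sin T) - (of_real l * \<alpha>) * of_real (cos T)) \<le> 1 + cmod \<alpha>"
      proof -
        have "cmod (of_real (sin T) - (of_real l * \<alpha>) * of_real (cos T)) \<le> 1 + cmod (of_real l * \<alpha>)"
          by (rule norm_sin_minus)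
        also have "cmod (of_real l * \<alpha>) \<le> cmod \<alpha>" using l by (simp add: norm_mult mult_left_le_one_le)
        finally show ?thesis by simp
      qed
      have "norm (\<alpha> * Acs (of_real l * \<alpha>) T)
          = cmod \<alpha> * (exp (- (Re (of_real l * \<alpha>) * T)) * cmod (of_real (sin T) - (of_real l * \<alpha>) * of_real (cos T)) / cmod (1 + (of_real l * \<alpha>) ^ 2))"
        by (simp add: norm_mult norm_Acs)
      also have "\<dots> \<le> cmod \<alpha> * (exp (- ((Re \<alpha> * T) * l)) * (1 + cmod \<alpha>) / kk)"
      proof (rule mult_left_mono)
        have e: "exp (- (Re (of_real l * \<alpha>) * T)) = exp (- ((Re \<alpha> * T) * l))" by (simp add: algebra_simps)
        show "exp (- (Re (of_real l * \<alpha>) * T)) * cmod (of_real (sin T) - (of_real l * \<alpha>) * of_real (cos T)) / cmod (1 + (of_real l * \<alpha>) ^ 2)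
            \<le> exp (- ((Re \<alpha> * T) * l)) * (1 + cmod \<alpha>) / kk"
          unfolding e by (rule frac_le) (use lb kk ns in \<open>auto intro: mult_left_mono\<close>)
      qed simp
      also have "\<dots> = C * exp (- ((Re \<alpha> * T) * l))" by (simp add: C_def)
      finally show "norm (\<alpha> * Acs (of_real l * \<alpha>) T) \<le> C * exp (- ((Re \<alpha> * T) * l))" .
    qed
    also have "\<dots> = C * integral {0..1} (\<lambda>l. exp (- ((Re \<alpha> * T) * l)))" by simp
    also have "\<dots> \<le> C * (1 / (Re \<alpha> * T))"
      using int_exp_neg_le[OF r, of 1] C_def kk by (intro mult_left_mono) auto
    finally show ?thesis .
  qed
  have R0: "(R \<longlongrightarrow> 0) at_top"
  proof (rule Lim_null_comparison)
    show "eventually (\<lambda>T. norm (R T) \<le> C * (1 / (Re \<alpha> * T))) at_top"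
      using eventually_gt_at_top[of "0::real"] by eventually_elim (rule bnd)
    have "((\<lambda>T. C * (1 / (Re \<alpha> * T))) \<longlongrightarrow> C * 0) at_top"
      by (intro tendsto_mult tendsto_const tendsto_divide_0[OF tendsto_const]
          filterlim_tendsto_pos_mult_at_top[OF tendsto_const a filterlim_ident] filterlim_at_top_imp_at_infinity)
    thus "((\<lambda>T. C * (1 / (Re \<alpha> * T))) \<longlongrightarrow> 0) at_top" by simp
  qed
  have l: "((\<lambda>T. R T + Ln (1 + \<alpha> ^ 2) / 2) \<longlongrightarrow> 0 + Ln (1 + \<alpha> ^ 2) / 2) at_top"
    by (intro tendsto_add R0 tendsto_const)
  have ev: "eventually (\<lambda>T. R T + Ln (1 + \<alpha> ^ 2) / 2 = integral {0..T} (\<lambda>t. of_real (cos t) * Vf \<alpha> t)) at_top"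
    using eventually_ge_at_top[of "0::real"] by eventually_elim (simp add: eq)
  show ?thesis using Lim_transform_eventually[OF l ev] by simp
qed


lemma alg8: "(E::complex) \<noteq> 0 \<Longrightarrow> E \<noteq> 1 \<Longrightarrow> (1 - Q) / (E - 1) + Q / E = (1 - Q / E) / (E - 1)"
proof -
  assume "E \<noteq> 0" "E \<noteq> 1"
  hence "E - 1 \<noteq> 0" by simp
  thus ?thesis using \<open>E \<noteq> 0\<close> by (simp add: field_simps)
qed

lemma geom:
  fixes z :: complex
  assumes z: "exp z \<noteq> 1"
  shows "(\<Sum>n=1..K. exp (- (of_nat n * z))) = (1 - exp (- (of_nat K * z))) / (exp z - 1)"
proof (induction K)
  case 0 thus ?case by simp
next
  case (Suc K)
  have ee: "- (of_nat (Suc K) * z) = - (of_nat K * z) - z" by (simp add: algebra_simps)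
  have e: "exp (- (of_nat (Suc K) * z)) = exp (- (of_nat K * z)) / exp z"
    unfolding ee by (rule exp_diff)
  have "(\<Sum>n=1..Suc K. exp (- (of_nat n * z))) = (\<Sum>n=1..K. exp (- (of_nat n * z))) + exp (- (of_nat (Suc K) * z))"
    by simp
  also have "\<dots> = (1 - exp (- (of_nat K * z))) / (exp z - 1) + exp (- (of_nat K * z)) / exp z"
    unfolding Suc e ..
  also have "\<dots> = (1 - exp (- (of_nat K * z)) / exp z) / (exp z - 1)"
    by (rule alg8[OF exp_not_eq_zero z])
  finally show ?case unfolding e .
qed

lemma alg9':
  fixes w D Q t :: complex
  assumes "D \<noteq> 0" "t \<noteq> 0"
  shows "(w / 2) / D - 1 / (2 * t) = (w / 2) * ((1 - Q) / D) + Q * ((w / 2) / D - 1 / (2 * t)) - ((1 - Q) / t) / 2"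
  using assms by (simp add: field_simps)

lemma alg9:
  fixes w E Q t :: complex
  assumes "E \<noteq> 1" "t \<noteq> 0"
  shows "(w / 2) / (E - 1) - 1 / (2 * t) = (w / 2) * ((1 - Q) / (E - 1)) + Q * ((w / 2) / (E - 1) - 1 / (2 * t)) - ((1 - Q) / t) / 2"
  by (rule alg9') (use assms in auto)

context posU
begin

definition "C2 = (\<Sum>m. 1 / (real (Suc m))^2)"
definition "CS = cS * C2 + cmod ww / 4 + (cmod ww / 2) / (exp (Re ww) - 1) + 1 / 2"

lemma C2_nonneg: "C2 \<ge> 0" unfolding C2_def by (intro suminf_nonneg[OF sumsq]) simp

lemma SS0: "SS 0 = 0" by (simp add: SS_def gg_def)

lemma exp_ww_gt: "exp (Re ww) > 1" using Re_ww by simp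

lemma bnd_SSw:
  assumes t: "t \<ge> 0"
  shows "cmod (SS t - ww / 4) \<le> CS"
proof -
  have e1: "(cmod ww / 2) / (exp (Re ww) - 1) \<ge> 0" using exp_ww_gt by simp
  show ?thesis
  proof (cases "t \<le> 1")
    case True
    have "cmod (SS t - ww / 4) \<le> cmod (SS t) + cmod (ww / 4)" by (rule norm_triangle_ineq4)
    also have "cmod (SS t) \<le> t * cS * C2" unfolding C2_def by (rule bnd_SS[OF t])
    also have "t * cS * C2 \<le> 1 * cS * C2"
      using True cS_pos C2_nonneg by (intro mult_right_mono) auto
    finally show ?thesis using e1 by (simp add: CS_def norm_divide)
  next
    case False
    hence tp: "t > 1" by simp
    have ge: "exp (Re ww) - 1 \<le> cmod (exp (ww * of_real t) - 1)"
    proof -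
      have "exp (Re ww) \<le> exp (Re ww * t)" using tp Re_ww by simp
      also have "exp (Re ww * t) - 1 = cmod (exp (ww * of_real t)) - cmod (1::complex)" by (simp add: norm_exp_eq_Re)
      hence "exp (Re ww * t) - 1 \<le> cmod (exp (ww * of_real t) - 1)" using norm_triangle_ineq2[of "exp (ww * of_real t)" 1] by simp
      finally show ?thesis by simp
    qed
    have "cmod (SS t - ww / 4) = cmod ((ww / 2) / (exp (ww * of_real t) - 1) - 1 / (2 * of_real t))"
      using tp by (simp add: SS_closed)
    also have "\<dots> \<le> cmod ((ww / 2) / (exp (ww * of_real t) - 1)) + cmod (1 / (2 * of_real t))"
      by (rule norm_triangle_ineq4)
    finally have f0: "cmod (SS t - ww / 4) \<le> cmod ((ww / 2) / (exp (ww * of_real t) - 1)) + cmod (1 / (2 * of_real t))" .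
    have n1: "cmod ((ww / 2) / (exp (ww * of_real t) - 1)) \<le> (cmod ww / 2) / (exp (Re ww) - 1)"
    proof -
      have n2: "norm (ww / 2) = cmod ww / 2" by (simp add: norm_divide)
      have "cmod ((ww / 2) / (exp (ww * of_real t) - 1)) = (cmod ww / 2) / cmod (exp (ww * of_real t) - 1)"
        unfolding norm_divide[of "ww/2"] n2 ..
      also have "\<dots> \<le> (cmod ww / 2) / (exp (Re ww) - 1)"
        by (rule frac_le) (use ge exp_ww_gt in auto)
      finally show ?thesis .
    qed
    have n2: "cmod (1 / (2 * of_real t)) \<le> 1 / 2" using tp by (simp add: norm_divide)
    have f: "cmod (SS t - ww / 4) \<le> (cmod ww / 2) / (exp (Re ww) - 1) + 1 / 2" using f0 n1 n2 by linarith
    have "0 \<le> cS * C2" using cS_pos C2_nonneg by simp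
    moreover have "0 \<le> cmod ww / 4" by simp
    ultimately show ?thesis using f unfolding CS_def by linarith
  qed
qed

lemma pointwise_id:
  assumes t: "t \<ge> 0"
  shows "SS t - ww / 4 = (ww / 2) * (\<Sum>n=1..K. exp (- (of_nat n * ww * of_real t)))
      + exp (- (of_nat K * ww * of_real t)) * (SS t - ww / 4) - Vf (of_nat K * ww) t / 2"
proof (cases "t = 0")
  case True
  thus ?thesis by (simp add: SS0 Vf0 algebra_simps)
next
  case False
  hence tp: "t > 0" using t by simp
  define z where "z = ww * of_real t"
  have Rez: "Re z > 0" using tp Re_ww by (simp add: z_def)
  have Ez: "exp z \<noteq> 1"
  proof
    assume "exp z = 1" hence "cmod (exp z) = 1" by simp
    hence "exp (Re z) = 1" by (simp add: norm_exp_eq_Re)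
    thus False using Rez by simp
  qed
  have g: "(\<Sum>n=1..K. exp (- (of_nat n * ww * of_real t))) = (1 - exp (- (of_nat K * ww * of_real t))) / (exp (ww * of_real t) - 1)"
    using geom[OF Ez, of K] by (simp add: z_def mult.assoc)
  have v: "Vf (of_nat K * ww) t = (1 - exp (- (of_nat K * ww * of_real t))) / of_real t"
    using Vf_pos[of t "of_nat K * ww"] False by simp
  have sc: "SS t - ww / 4 = (ww / 2) / (exp (ww * of_real t) - 1) - 1 / (2 * of_real t)"
    using SS_closed[OF tp] by simp
  show ?thesis
    unfolding g v sc
    by (rule alg9) (use Ez False in \<open>simp_all add: z_def\<close>)
qed

end


context posU
begin

lemma Re_nww: "n \<ge> 1 \<Longrightarrow> Re (of_nat n * ww) > 0"
  using Re_ww by simp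

lemma K_bound:
  assumes K: "K \<ge> 1"
  shows "norm (Phi - ((ww / 2) * (\<Sum>n=1..K. of_nat n * ww / (1 + (of_nat n * ww) ^ 2)) - Ln (1 + (of_nat K * ww) ^ 2) / 4))
          \<le> CS / (real K * Re ww)"
proof -
  define \<alpha> where "\<alpha> = of_nat K * ww"
  have a: "Re \<alpha> > 0" unfolding \<alpha>_def by (rule Re_nww[OF K])
  define I where "I T = integral {0..T} (\<lambda>t. of_real (cos t) * (SS t - ww / 4))" for T
  define P1 where "P1 T = (\<Sum>n=1..K. (Acs (of_nat n * ww) T - Acs (of_nat n * ww) 0))" for T
  define J where "J T = integral {0..T} (\<lambda>t. of_real (cos t) * Vf \<alpha> t)" for T
  define Mf where "Mf t = of_real (cos t) * (exp (- (of_nat K * ww * of_real t)) * (SS t - ww / 4))" for t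
  have r: "real K * Re ww > 0" using K Re_ww by simp
  have main: "norm (I T - (ww / 2) * P1 T + J T / 2) \<le> CS / (real K * Re ww)" if T: "T \<ge> 0" for T
  proof -
    have intI: "(\<lambda>t. of_real (cos t) * (SS t - ww / 4)) integrable_on {0..T}"
    proof -
      have "(\<lambda>t. of_real (cos t) * SS t - ww / 4 * of_real (cos t)) integrable_on {0..T}"
        by (intro integrable_diff integral_SS(1)[OF T] integrable_continuous_interval continuous_intros)
      thus ?thesis by (simp add: algebra_simps)
    qed
    have hI: "((\<lambda>t. of_real (cos t) * (SS t - ww / 4)) has_integral I T) {0..T}"
      unfolding I_def by (rule integrable_integral[OF intI])
    have hP: "((\<lambda>t. (ww / 2) * (\<Sum>n=1..K. of_real (cos t) * exp (- (of_nat n * ww * of_real t)))) has_integral (ww / 2) * P1 T) {0..T}"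
      unfolding P1_def
      by (intro has_integral_mult_right has_integral_sum cosexp_int one_plus_sq_nz Re_nww T) auto
    have hJ: "((\<lambda>t. of_real (cos t) * Vf \<alpha> t) has_integral J T) {0..T}"
      unfolding J_def by (intro integrable_integral integrable_continuous_interval continuous_intros Vf_cont)
    have h: "((\<lambda>t. of_real (cos t) * (SS t - ww / 4) - (ww / 2) * (\<Sum>n=1..K. of_real (cos t) * exp (- (of_nat n * ww * of_real t)))
         + (of_real (cos t) * Vf \<alpha> t) / 2) has_integral (I T - (ww / 2) * P1 T + J T / 2)) {0..T}"
      by (intro has_integral_add has_integral_diff hI hP has_integral_divide hJ)
    have hM: "(Mf has_integral (I T - (ww / 2) * P1 T + J T / 2)) {0..T}"
    proof (rule has_integral_eq[OF _ h])
      fix t :: real assume t: "t \<in> {0..T}"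
      have "of_real (cos t) * (SS t - ww / 4) = of_real (cos t) * ((ww / 2) * (\<Sum>n=1..K. exp (- (of_nat n * ww * of_real t)))
         + exp (- (of_nat K * ww * of_real t)) * (SS t - ww / 4) - Vf (of_nat K * ww) t / 2)"
        using pointwise_id[of t K] t by simp
      thus "of_real (cos t) * (SS t - ww / 4) - (ww / 2) * (\<Sum>n=1..K. of_real (cos t) * exp (- (of_nat n * ww * of_real t)))
         + (of_real (cos t) * Vf \<alpha> t) / 2 = Mf t"
        by (simp add: Mf_def \<alpha>_def algebra_simps sum_distrib_left)
    qed
    have "norm (I T - (ww / 2) * P1 T + J T / 2) = norm (integral {0..T} Mf)"
      using integral_unique[OF hM] by simp
    also have "\<dots> \<le> integral {0..T} (\<lambda>t. CS * exp (- ((real K * Re ww) * t)))"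
    proof (rule integral_norm_bound_integral)
      show "Mf integrable_on {0..T}" using hM by blast
      show "(\<lambda>t. CS * exp (- ((real K * Re ww) * t))) integrable_on {0..T}"
        by (intro integrable_continuous_interval continuous_intros)
      fix t assume t: "t \<in> {0..T}"
      have ne: "norm (exp (- (of_nat K * ww * of_real t))) = exp (- ((real K * Re ww) * t))"
        by (simp add: norm_exp_eq_Re algebra_simps)
      have "norm (Mf t) = norm (of_real (cos t) :: complex) * (norm (exp (- (of_nat K * ww * of_real t))) * cmod (SS t - ww / 4))"
        unfolding Mf_def norm_mult ..
      also have "\<dots> = \<bar>cos t\<bar> * (exp (- ((real K * Re ww) * t)) * cmod (SS t - ww / 4))"
        unfolding ne by simp
      also have "\<dots> \<le> exp (- ((real K * Re ww) * t)) * cmod (SS t - ww / 4)"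
        by (rule cos_mult_le) simp
      also have "\<dots> \<le> exp (- ((real K * Re ww) * t)) * CS"
        by (intro mult_left_mono bnd_SSw) (use t in auto)
      finally show "norm (Mf t) \<le> CS * exp (- ((real K * Re ww) * t))" by (simp add: mult.commute)
    qed
    also have "\<dots> = CS * integral {0..T} (\<lambda>t. exp (- ((real K * Re ww) * t)))" by simp
    also have "\<dots> \<le> CS * (1 / (real K * Re ww))"
    proof (rule mult_left_mono[OF int_exp_neg_le[OF r T]])
      show "0 \<le> CS" using bnd_SSw[of 0] norm_ge_zero order_trans by blast
    qed
    finally show ?thesis by simp
  qed
  have lI: "(I \<longlongrightarrow> Phi) at_top" unfolding I_def by (rule claimA)
  have lP: "(P1 \<longlongrightarrow> (\<Sum>n=1..K. (0 - Acs (of_nat n * ww) 0))) at_top"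
    unfolding P1_def by (intro tendsto_sum tendsto_diff Acs_lim Re_nww tendsto_const) auto
  have lJ: "(J \<longlongrightarrow> Ln (1 + \<alpha> ^ 2) / 2) at_top" unfolding J_def by (rule JT_lim[OF a])
  have lim: "((\<lambda>T. I T - (ww / 2) * P1 T + J T / 2) \<longlongrightarrow>
      Phi - (ww / 2) * (\<Sum>n=1..K. (0 - Acs (of_nat n * ww) 0)) + (Ln (1 + \<alpha> ^ 2) / 2) / 2) at_top"
    by (intro tendsto_add tendsto_diff tendsto_mult tendsto_divide lI lP lJ tendsto_const) auto
  have "norm (Phi - (ww / 2) * (\<Sum>n=1..K. (0 - Acs (of_nat n * ww) 0)) + (Ln (1 + \<alpha> ^ 2) / 2) / 2) \<le> CS / (real K * Re ww)"
  proof (rule Lim_norm_ubound[OF _ lim])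
    show "eventually (\<lambda>T. norm (I T - (ww / 2) * P1 T + J T / 2) \<le> CS / (real K * Re ww)) at_top"
      using eventually_ge_at_top[of "0::real"] by eventually_elim (rule main)
  qed simp
  moreover have "(\<Sum>n=1..K. (0 - Acs (of_nat n * ww) 0)) = (\<Sum>n=1..K. of_nat n * ww / (1 + (of_nat n * ww) ^ 2))"
    by (simp add: Acs0)
  ultimately show ?thesis by (simp add: \<alpha>_def algebra_simps)
qed

end


lemma sum_shift0: "(\<Sum>n<Suc K. f n) = f 0 + (\<Sum>n=1..K. f n)" for f :: "nat \<Rightarrow> complex"
  by (induction K) simp_all

lemma alg11: "(D::complex) \<noteq> 0 \<Longrightarrow> x / (2 * D) = (2 * x / D) / 4"
  by (simp add: field_simps)

lemma alg10:
  fixes b w :: complex and n :: nat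
  assumes b: "b \<noteq> 0" and w: "w = inverse b" and p: "\<i> * b + of_nat n \<noteq> 0" and m: "- (\<i> * b) + of_nat n \<noteq> 0"
  shows "(w / 2) * (of_nat n * w / (1 + (of_nat n * w) ^ 2)) = (inverse (\<i> * b + of_nat n) + inverse (- (\<i> * b) + of_nat n)) / 4"
proof -
  have pm: "(\<i> * b + of_nat n) * (- (\<i> * b) + of_nat n) = b ^ 2 + (of_nat n) ^ 2"
    by (simp add: algebra_simps power2_eq_square)
  have nz: "b ^ 2 + (of_nat n) ^ 2 \<noteq> 0" using p m pm by (metis mult_eq_0_iff)
  have e1: "1 + (of_nat n * w) ^ 2 = (b ^ 2 + (of_nat n) ^ 2) / b ^ 2"
    using b by (simp add: w field_simps power2_eq_square)
  have "(w / 2) * (of_nat n * w / (1 + (of_nat n * w) ^ 2)) = of_nat n / (2 * (b ^ 2 + (of_nat n) ^ 2))"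
    unfolding e1 using b nz by (simp add: w field_simps power2_eq_square)
  also have "\<dots> = (inverse (\<i> * b + of_nat n) + inverse (- (\<i> * b) + of_nat n)) / 4"
  proof -
    have "inverse (\<i> * b + of_nat n) + inverse (- (\<i> * b) + of_nat n) = ((- (\<i> * b) + of_nat n) + (\<i> * b + of_nat n)) / ((\<i> * b + of_nat n) * (- (\<i> * b) + of_nat n))"
      using p m by (simp add: field_simps)
    also have "\<dots> = 2 * of_nat n / (b ^ 2 + (of_nat n) ^ 2)" unfolding pm by simp
    finally have f: "inverse (\<i> * b + of_nat n) + inverse (- (\<i> * b) + of_nat n) = 2 * of_nat n / (b ^ 2 + (of_nat n) ^ 2)" .
    show ?thesis unfolding f by (rule alg11[OF nz])
  qed
  finally show ?thesis .
qed

context posU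
begin

definition "bb = u / (2 * of_real pi)"

lemma ww_inv: "ww = inverse bb" by (simp add: ww_def bb_def)
lemma Re_bb: "Re bb > 0"
proof -
  have "bb = of_real (1 / (2 * pi)) * u" by (simp add: bb_def)
  hence "Re bb = Re u / (2 * pi)" by simp
  thus ?thesis using u by simp
qed
lemma bb0: "bb \<noteq> 0" using Re_bb by auto

lemma ibn_nz: "\<i> * bb + of_nat n \<noteq> 0" "- (\<i> * bb) + of_nat n \<noteq> 0"
  by (rule Im_nz, use Re_bb in simp)+

lemma ww_sq_not_nonpos: "ww ^ 2 \<notin> \<real>\<^sub>\<le>\<^sub>0"
proof
  assume "ww ^ 2 \<in> \<real>\<^sub>\<le>\<^sub>0"
  hence im: "Im (ww ^ 2) = 0" and re: "Re (ww ^ 2) \<le> 0" by (auto simp: complex_nonpos_Reals_iff)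
  have "Im (ww ^ 2) = 2 * Re ww * Im ww" by (simp add: power2_eq_square)
  hence "Im ww = 0" using im Re_ww by simp
  hence "Re (ww ^ 2) = Re ww * Re ww" by (simp add: power2_eq_square)
  moreover have "Re ww * Re ww > 0" by (rule mult_pos_pos[OF Re_ww Re_ww])
  ultimately show False using re by linarith
qed

lemma Ln_ww_sq: "Ln (ww ^ 2) = - 2 * Ln bb"
proof -
  have ww0: "ww \<noteq> 0" using Re_ww by auto
  have im: "\<bar>Im (Ln ww)\<bar> < pi / 2" by (rule Re_Ln_pos_lt_imp[OF Re_ww])
  have "Ln (ww * ww) = Ln ww + Ln ww"
    by (rule Ln_times_simple[OF ww0 ww0]) (use im in auto)
  moreover have "Ln ww = - Ln bb"
    unfolding ww_inv by (rule Ln_inverse) (use Re_bb in \<open>auto simp: complex_nonpos_Reals_iff\<close>)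
  ultimately show ?thesis by (simp add: power2_eq_square)
qed

definition "Dg z m = of_real (ln (real m)) - (\<Sum>n<m. inverse (z + of_nat n))" for z m

lemma X_eq:
  "(ww / 2) * (\<Sum>n=1..K. of_nat n * ww / (1 + (of_nat n * ww) ^ 2)) - Ln (1 + (of_nat K * ww) ^ 2) / 4
   = - (Dg (\<i> * bb) (Suc K) + Dg (- (\<i> * bb)) (Suc K)) / 4 + (2 * of_real (ln (real (Suc K))) - Ln (1 + (of_nat K * ww) ^ 2)) / 4"
proof -
  have s: "(ww / 2) * (\<Sum>n=1..K. of_nat n * ww / (1 + (of_nat n * ww) ^ 2))
      = (\<Sum>n=1..K. (inverse (\<i> * bb + of_nat n) + inverse (- (\<i> * bb) + of_nat n)) / 4)"
    unfolding sum_distrib_left by (intro sum.cong refl alg10[OF bb0 ww_inv ibn_nz])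
  have z: "inverse (\<i> * bb + of_nat 0) + inverse (- (\<i> * bb) + of_nat 0) = 0" by simp
  have "(\<Sum>n<Suc K. inverse (\<i> * bb + of_nat n)) + (\<Sum>n<Suc K. inverse (- (\<i> * bb) + of_nat n))
      = (\<Sum>n<Suc K. inverse (\<i> * bb + of_nat n) + inverse (- (\<i> * bb) + of_nat n))"
    by (simp add: sum.distrib)
  also have "\<dots> = (\<Sum>n=1..K. inverse (\<i> * bb + of_nat n) + inverse (- (\<i> * bb) + of_nat n))"
    unfolding sum_shift0 z by simp
  finally have t: "(\<Sum>n<Suc K. inverse (\<i> * bb + of_nat n)) + (\<Sum>n<Suc K. inverse (- (\<i> * bb) + of_nat n))
      = (\<Sum>n=1..K. inverse (\<i> * bb + of_nat n) + inverse (- (\<i> * bb) + of_nat n))" .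
  show ?thesis unfolding s Dg_def
    using t by (simp add: sum_divide_distrib[symmetric] field_simps)
qed

end


context posU
begin

lemma B_lim: "(\<lambda>K. 2 * of_real (ln (real (Suc K))) - Ln (1 + (of_nat K * ww) ^ 2)) \<longlonglongrightarrow> 2 * Ln bb"
proof -
  have l1: "(\<lambda>K. ln (real (Suc K)) - ln (real K)) \<longlonglongrightarrow> 0" by real_asymp
  have r: "(\<lambda>K. 1 / (real K)^2) \<longlonglongrightarrow> 0" by real_asymp
  have l2: "(\<lambda>K. of_real (1 / (real K)^2) + ww ^ 2) \<longlonglongrightarrow> of_real 0 + ww ^ 2"
    by (intro tendsto_add tendsto_of_real r tendsto_const)
  have l3: "(\<lambda>K. Ln (of_real (1 / (real K)^2) + ww ^ 2)) \<longlonglongrightarrow> Ln (ww ^ 2)"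
    using tendsto_Ln[OF l2] ww_sq_not_nonpos by simp
  have l4: "(\<lambda>K. 2 * of_real (ln (real (Suc K)) - ln (real K)) - Ln (of_real (1 / (real K)^2) + ww ^ 2))
       \<longlonglongrightarrow> 2 * of_real 0 - Ln (ww ^ 2)"
    by (intro tendsto_diff tendsto_mult tendsto_const tendsto_of_real l1 l3)
  have ev: "eventually (\<lambda>K. 2 * of_real (ln (real (Suc K)) - ln (real K)) - Ln (of_real (1 / (real K)^2) + ww ^ 2)
       = 2 * of_real (ln (real (Suc K))) - Ln (1 + (of_nat K * ww) ^ 2)) sequentially"
    using eventually_ge_at_top[of "1::nat"]
  proof eventually_elim
    case (elim K)
    have Kp: "real K ^ 2 > 0" using elim by simp
    have nz: "of_real (1 / (real K)^2) + ww ^ 2 \<noteq> 0"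
    proof
      assume h: "of_real (1 / (real K)^2) + ww ^ 2 = 0"
      have "ww ^ 2 = (of_real (1 / (real K)^2) + ww ^ 2) - of_real (1 / (real K)^2)" by (simp only: add_diff_cancel_left')
      also have "\<dots> = - of_real (1 / (real K)^2)" unfolding h by simp
      finally have "ww ^ 2 = - of_real (1 / (real K)^2)" .
      hence "ww ^ 2 \<in> \<real>\<^sub>\<le>\<^sub>0" using Kp by (auto simp: complex_nonpos_Reals_iff)
      thus False using ww_sq_not_nonpos by blast
    qed
    have e: "1 + (of_nat K * ww) ^ 2 = of_real (real K ^ 2) * (of_real (1 / (real K)^2) + ww ^ 2)"
      using Kp by (simp add: field_simps power_mult_distrib)
    have "Ln (1 + (of_nat K * ww) ^ 2) = Ln (of_real (real K ^ 2)) + Ln (of_real (1 / (real K)^2) + ww ^ 2)"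
      unfolding e by (rule Ln_times_of_real[OF Kp nz])
    also have "Ln (of_real (real K ^ 2)) = of_real (2 * ln (real K))"
      by (subst Ln_of_real[OF Kp]) (simp add: ln_realpow)
    finally show ?case by (simp add: algebra_simps)
  qed
  have "(\<lambda>K. 2 * of_real (ln (real (Suc K))) - Ln (1 + (of_nat K * ww) ^ 2)) \<longlonglongrightarrow> 2 * of_real 0 - Ln (ww ^ 2)"
    by (rule Lim_transform_eventually[OF l4 ev])
  thus ?thesis by (simp add: Ln_ww_sq)
qed

lemma X_lim:
  "(\<lambda>K. (ww / 2) * (\<Sum>n=1..K. of_nat n * ww / (1 + (of_nat n * ww) ^ 2)) - Ln (1 + (of_nat K * ww) ^ 2) / 4)
     \<longlonglongrightarrow> Ln bb / 2 - (Digamma (\<i> * bb) + Digamma (- (\<i> * bb))) / 4"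
proof -
  have z1: "\<i> * bb \<noteq> 0" "- (\<i> * bb) \<noteq> 0" using bb0 by auto
  have d1: "(\<lambda>K. Dg (\<i> * bb) (Suc K)) \<longlonglongrightarrow> Digamma (\<i> * bb)"
    unfolding Dg_def by (rule LIMSEQ_Suc[OF Digamma_LIMSEQ[OF z1(1)]])
  have d2: "(\<lambda>K. Dg (- (\<i> * bb)) (Suc K)) \<longlonglongrightarrow> Digamma (- (\<i> * bb))"
    unfolding Dg_def by (rule LIMSEQ_Suc[OF Digamma_LIMSEQ[OF z1(2)]])
  have "(\<lambda>K. - (Dg (\<i> * bb) (Suc K) + Dg (- (\<i> * bb)) (Suc K)) / 4 + (2 * of_real (ln (real (Suc K))) - Ln (1 + (of_nat K * ww) ^ 2)) / 4)
      \<longlonglongrightarrow> - (Digamma (\<i> * bb) + Digamma (- (\<i> * bb))) / 4 + (2 * Ln bb) / 4"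
    (is "?S \<longlonglongrightarrow> _")
    by (intro tendsto_add tendsto_divide tendsto_minus d1 d2 B_lim tendsto_const) auto
  moreover have lv: "- (Digamma (\<i> * bb) + Digamma (- (\<i> * bb))) / 4 + (2 * Ln bb) / 4 = Ln bb / 2 - (Digamma (\<i> * bb) + Digamma (- (\<i> * bb))) / 4"
    by (simp add: field_simps)
  ultimately have "?S \<longlonglongrightarrow> Ln bb / 2 - (Digamma (\<i> * bb) + Digamma (- (\<i> * bb))) / 4"
    by (simp only:)
  thus ?thesis unfolding X_eq .
qed

lemma Phi_val: "Phi = Ln bb / 2 - (Digamma (\<i> * bb) + Digamma (- (\<i> * bb))) / 4"
proof -
  define X where "X K = (ww / 2) * (\<Sum>n=1..K. of_nat n * ww / (1 + (of_nat n * ww) ^ 2)) - Ln (1 + (of_nat K * ww) ^ 2) / 4" for K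
  have "(\<lambda>K. Phi - X K) \<longlonglongrightarrow> 0"
  proof (rule Lim_null_comparison)
    show "eventually (\<lambda>K. norm (Phi - X K) \<le> CS / Re ww * (1 / real K)) sequentially"
      using eventually_ge_at_top[of "1::nat"]
      by eventually_elim (use K_bound in \<open>simp add: X_def field_simps\<close>)
    have "(\<lambda>K. CS / Re ww * (1 / real K)) \<longlonglongrightarrow> CS / Re ww * 0"
      by (intro tendsto_mult tendsto_const lim_1_over_n)
    thus "(\<lambda>K. CS / Re ww * (1 / real K)) \<longlonglongrightarrow> 0" by simp
  qed
  hence "X \<longlonglongrightarrow> Phi" using tendsto_diff[OF tendsto_const[of Phi]] by (fastforce simp: LIM_zero_iff)
  moreover have "X \<longlonglongrightarrow> Ln bb / 2 - (Digamma (\<i> * bb) + Digamma (- (\<i> * bb))) / 4"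
    unfolding X_def by (rule X_lim)
  ultimately show ?thesis by (rule LIMSEQ_unique)
qed

end

theorem theorem1p2:
  fixes u :: complex
  assumes "Re u > 0"
  shows "(\<forall>m::nat. m \<ge> 1 \<longrightarrow>
            improper_integral_converges
              (\<lambda>t. of_real t * of_real (cos t) / (of_real t ^ 2 + of_nat m ^ 2 * u ^ 2)))
     \<and> (\<lambda>m::nat. improper_integral
              (\<lambda>t. of_real t * of_real (cos t) / (of_real t ^ 2 + of_nat (Suc m) ^ 2 * u ^ 2)))
         sums ((1/2) * (Ln (u / (2 * of_real pi))
                 - (1/2) * (Digamma (\<i> * u / (2 * of_real pi)) + Digamma (- \<i> * u / (2 * of_real pi)))))"
proof -
  interpret posU u by unfold_locales (rule assms)
  have feq: "(\<lambda>t. of_real t * of_real (cos t) / (of_real t ^ 2 + of_nat (Suc m) ^ 2 * u ^ 2))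
      = (\<lambda>t. of_real (cos t) * gg (aa m) t)" for m
    by (rule ext) (simp add: gg_aa)
  have conv: "improper_integral_converges (\<lambda>t. of_real (cos t) * gg (aa m) t)" for m
    unfolding improper_integral_converges_def
    using LL_int[of m] by (auto intro!: integrable_continuous_interval cont_gg Re_aa)
  have val: "improper_integral (\<lambda>t. of_real (cos t) * gg (aa m) t) = Fm m" for m
    unfolding improper_integral_def Fm_def by (rule tendsto_Lim[OF _ LL_int]) simp
  have part1: "\<forall>m::nat. m \<ge> 1 \<longrightarrow>
            improper_integral_converges
              (\<lambda>t. of_real t * of_real (cos t) / (of_real t ^ 2 + of_nat m ^ 2 * u ^ 2))"
  proof (intro allI impI)
    fix m :: nat assume "m \<ge> 1"
    then obtain k where k: "m = Suc k" by (cases m) auto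
    show "improper_integral_converges (\<lambda>t. of_real t * of_real (cos t) / (of_real t ^ 2 + of_nat m ^ 2 * u ^ 2))"
      unfolding k feq by (rule conv)
  qed
  have s: "Fm sums Phi" unfolding Phi_def by (rule summable_sums[OF summable_Fm])
  have tgt: "Phi = (1/2) * (Ln (u / (2 * of_real pi))
                 - (1/2) * (Digamma (\<i> * u / (2 * of_real pi)) + Digamma (- \<i> * u / (2 * of_real pi))))"
  proof -
    have e1: "\<i> * u / (2 * of_real pi) = \<i> * bb" by (simp add: bb_def)
    have e2: "- \<i> * u / (2 * of_real pi) = - (\<i> * bb)" by (simp add: bb_def)
    show ?thesis unfolding Phi_val e1 e2 by (simp add: bb_def algebra_simps)
  qed
  show ?thesis using part1 s unfolding feq val tgt by simp
qed


end
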